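(* Let $\tau$ lie in the complex upper half plane, $q=e^{2\pi i\tau}$, and let $\eta(\tau)=q^{1/24}\prod_{n\ge1}(1-q^n)$ be the Dedekind eta function. Define $$t(\tau)=\frac12\,\frac{\eta(\tau)^4\eta(4\tau)^2\eta(8\tau)^4}{\eta(2\tau)^{10}},\qquad f(\tau)=\frac{\eta(2\tau)^{10}}{\eta(\tau)^4\eta(4\tau)^4}.$$ Then in a neighbourhood of $\tau=i\infty$ we have $$\sum_{n\ge0}P_n\,t(\tau)^n=f(\tau),$$ where $(P_n)_{n\ge0}$ are the Catalan-Larcombe-French numbers.
   Context: The Catalan-Larcombe-French numbers are defined by $P_0=1$, $P_1=8$ and, for $n\ge 2$, $n^2P_n-8(3n^2-3n+1)P_{n-1}+128(n-1)^2P_{n-2}=0$. *)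

theory Defs
  imports "HOL-Analysis.Analysis"
begin

text \<open>Catalan-Larcombe-French numbers: P 0 = 1, P 1 = 8 and for m \<ge> 2,
  m^2 P m - 8 (3 m^2 - 3 m + 1) P (m-1) + 128 (m-1)^2 P (m-2) = 0,
  i.e. P m = (8 (3 m^2 - 3 m + 1) P (m-1) - 128 (m-1)^2 P (m-2)) / m^2.\<close>
fun clf :: "nat \<Rightarrow> real" where
  "clf 0 = 1"
| "clf (Suc 0) = 8"
| "clf (Suc (Suc n)) =
     (let m = real (n + 2) in
       (8 * (3 * m^2 - 3 * m + 1) * clf (Suc n) - 128 * (m - 1)^2 * clf n) / m^2)"

definition nome :: "complex \<Rightarrow> complex" where
  "nome \<tau> = exp (2 * pi * \<i> * \<tau>)"

definition dedekind_eta :: "complex \<Rightarrow> complex" where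
  "dedekind_eta \<tau> = exp (2 * pi * \<i> * \<tau> / 24) * prodinf (\<lambda>n. 1 - nome \<tau> ^ (n + 1))"

definition clf_t :: "complex \<Rightarrow> complex" where
  "clf_t \<tau> = (1/2) * (dedekind_eta \<tau> ^ 4 * dedekind_eta (4 * \<tau>) ^ 2 * dedekind_eta (8 * \<tau>) ^ 4)
                 / dedekind_eta (2 * \<tau>) ^ 10"

definition clf_f :: "complex \<Rightarrow> complex" where
  "clf_f \<tau> = dedekind_eta (2 * \<tau>) ^ 10 / (dedekind_eta \<tau> ^ 4 * dedekind_eta (4 * \<tau>) ^ 4)"

end

theory Submission
  imports Defs "HOL-Complex_Analysis.Complex_Analysis"
begin


lemma central_binom_rec: "Suc n * (2*Suc n choose Suc n) = 2 * (2*n+1) * (2*n choose n)"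
proof -
  define B0 where "B0 = (2*n choose n)"
  define B1 where "B1 = (Suc (2*n) choose n)"
  define B2 where "B2 = (2*Suc n choose Suc n)"
  have a: "Suc (Suc (2*n)) * B1 = B2 * Suc n"
    using Suc_times_binomial_eq[of "Suc (2*n)" n] unfolding B1_def B2_def by simp
  have b: "Suc (2*n) * B0 = B1 * Suc n"
  proof -
    have "Suc (2*n) * B0 = (Suc (2*n) choose Suc n) * Suc n"
      using Suc_times_binomial_eq[of "2*n" n] unfolding B0_def by simp
    moreover have "(Suc (2*n) choose Suc n) = B1"
      using binomial_symmetric[of "Suc n" "Suc (2*n)"] unfolding B1_def by simp
    ultimately show ?thesis by simp
  qed
  have "Suc n * (Suc n * B2) = Suc n * (2 * (2*n+1) * B0)"
  proof -
    have "Suc n * (Suc n * B2) = Suc n * (B2 * Suc n)" by simp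
    also have "\<dots> = Suc n * (Suc (Suc (2*n)) * B1)" using a by simp
    also have "\<dots> = 2 * (B1 * Suc n) * Suc n" by (simp only: mult_ac) simp
    also have "\<dots> = 2 * (Suc (2*n) * B0) * Suc n" using b by simp
    finally show ?thesis by (simp add: mult_ac)
  qed
  hence "Suc n * B2 = 2 * (2*n+1) * B0" by (metis mult_left_cancel nat.simps(3))
  thus ?thesis unfolding B0_def B2_def .
qed

definition Gf :: "complex fps" where
  "Gf = Abs_fps (\<lambda>k. of_nat ((2*k choose k)^2))"

definition thop :: "complex fps \<Rightarrow> complex fps" where
  "thop F = fps_X * fps_deriv F"

lemma thop_nth [simp]: "thop F $ n = of_nat n * F $ n"
  by (simp add: thop_def fps_mult_fps_X_deriv_shift)

lemma Gf_rec: "of_nat ((Suc m)^2) * Gf $ Suc m = 4 * of_nat ((2*m+1)^2) * Gf $ m"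
proof -
  have "(Suc m * (2*Suc m choose Suc m))^2 = (2 * (2*m+1) * (2*m choose m))^2"
    by (simp only: central_binom_rec)
  hence "(Suc m)^2 * (2*Suc m choose Suc m)^2 = 4 * (2*m+1)^2 * (2*m choose m)^2"
    by (simp only: power_mult_distrib) simp
  hence "(of_nat ((Suc m)^2 * (2*Suc m choose Suc m)^2) :: complex) = of_nat (4 * (2*m+1)^2 * (2*m choose m)^2)"
    by metis
  thus ?thesis by (simp add: Gf_def)
qed

lemma G_ode_th: "thop (thop Gf) - fps_X * (16 * thop (thop Gf) + 16 * thop Gf + 4 * Gf) = 0"
proof (rule fps_ext)
  fix n
  show "(thop (thop Gf) - fps_X * (16 * thop (thop Gf) + 16 * thop Gf + 4 * Gf)) $ n = 0 $ n"
  proof (cases n)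
    case 0 thus ?thesis by simp
  next
    case (Suc m)
    have "(thop (thop Gf) - fps_X * (16 * thop (thop Gf) + 16 * thop Gf + 4 * Gf)) $ n
        = of_nat ((Suc m)^2) * Gf $ Suc m - 4 * of_nat ((2*m+1)^2) * Gf $ m"
      using Suc by (simp add: fps_X_mult_nth del: of_nat_Suc) (simp add: algebra_simps power2_eq_square)
    thus ?thesis using Gf_rec[of m] by simp
  qed
qed

lemma fps_X_ne0: "(fps_X :: complex fps) \<noteq> 0" by simp

lemma G_ode: "fps_X * (1 - 16*fps_X) * fps_deriv (fps_deriv Gf) + (1 - 32*fps_X) * fps_deriv Gf - 4 * Gf = 0"
proof -
  have "fps_X * (fps_X * (1 - 16*fps_X) * fps_deriv (fps_deriv Gf) + (1 - 32*fps_X) * fps_deriv Gf - 4 * Gf)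
      = thop (thop Gf) - fps_X * (16 * thop (thop Gf) + 16 * thop Gf + 4 * Gf)"
    unfolding thop_def by (simp add: algebra_simps)
  also have "\<dots> = 0" by (rule G_ode_th)
  finally show ?thesis using fps_X_ne0 by simp
qed

definition Lop :: "complex fps \<Rightarrow> complex fps" where
  "Lop F = thop (thop F) - fps_X * (8 * (3 * thop (thop F) + 3 * thop F + F))
           + fps_X * (fps_X * (128 * (thop (thop F) + 2 * thop F + F)))"

lemma Lop_alt: "Lop F = fps_X^2 * (1 - 8*fps_X) * (1 - 16*fps_X) * fps_deriv (fps_deriv F)
   + fps_X * (1 - 48*fps_X + 384*fps_X^2) * fps_deriv F + (128*fps_X^2 - 8*fps_X) * F"
  unfolding Lop_def thop_def by (simp add: algebra_simps power2_eq_square)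

lemma Lop_nth1: "Lop F $ 1 = F $ 1 - 8 * F $ 0"
  unfolding Lop_def by simp

lemma Lop_nth2: "Lop F $ Suc (Suc n) = of_nat ((n+2)^2) * F $ Suc (Suc n)
   - 8 * (3 * of_nat ((n+2)^2) - 3 * of_nat (n+2) + 1) * F $ Suc n + 128 * of_nat ((n+1)^2) * F $ n"
  unfolding Lop_def by (simp del: of_nat_Suc) (simp add: algebra_simps power2_eq_square)

definition Pf :: "complex fps" where
  "Pf = Abs_fps (\<lambda>n. complex_of_real (clf n))"

lemma clf_rec: "real ((n+2)^2) * clf (Suc (Suc n))
   = 8 * (3 * real ((n+2)^2) - 3 * real (n+2) + 1) * clf (Suc n) - 128 * real ((n+1)^2) * clf n"
proof -
  have "real (n+2) \<noteq> 0" by simp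
  hence "(real (n+2))^2 \<noteq> 0" by simp
  thus ?thesis by (simp add: Let_def field_simps)
qed

lemma Lop_unique:
  fixes F :: "complex fps"
  assumes L: "Lop F = 0" and F0: "F $ 0 = 1"
  shows "F = Pf"
proof -
  have "F $ n = complex_of_real (clf n)" for n
  proof (induction n rule: nat_less_induct)
    case (1 n)
    show ?case
    proof (cases n)
      case 0 thus ?thesis using F0 by simp
    next
      case (Suc m)
      show ?thesis
      proof (cases m)
        case 0
        have "Lop F $ 1 = 0" using L by simp
        thus ?thesis using Suc 0 F0 Lop_nth1[of F] by simp
      next
        case (Suc k)
        have h1: "F $ Suc k = complex_of_real (clf (Suc k))" using 1 Suc \<open>n = Suc m\<close> by simp
        have h0: "F $ k = complex_of_real (clf k)" using 1 Suc \<open>n = Suc m\<close> by simp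
        have "Lop F $ Suc (Suc k) = 0" using L by simp
        hence e: "of_nat ((k+2)^2) * F $ Suc (Suc k) = 8 * (3 * of_nat ((k+2)^2) - 3 * of_nat (k+2) + 1) * F $ Suc k - 128 * of_nat ((k+1)^2) * F $ k"
          unfolding Lop_nth2 by (simp add: algebra_simps)
        have "complex_of_real (real ((k+2)^2) * clf (Suc (Suc k)))
            = complex_of_real (8 * (3 * real ((k+2)^2) - 3 * real (k+2) + 1) * clf (Suc k) - 128 * real ((k+1)^2) * clf k)"
          using clf_rec by simp
        hence "of_nat ((k+2)^2) * complex_of_real (clf (Suc (Suc k))) = of_nat ((k+2)^2) * F $ Suc (Suc k)"
          using e h1 h0 by simp
        moreover have "(of_nat ((k+2)^2) :: complex) \<noteq> 0" by (simp del: of_nat_power)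
        ultimately show ?thesis using Suc \<open>n = Suc m\<close> by simp
      qed
    qed
  qed
  thus ?thesis by (simp add: Pf_def fps_eq_iff)
qed

lemma Gf0 [simp]: "Gf $ 0 = 1" by (simp add: Gf_def)

lemma ode_compose:
  assumes p0: "fps_nth p 0 = 0"
  shows "p * (1 - 16*p) * (fps_deriv (fps_deriv Gf) oo p) + (1 - 32*p) * (fps_deriv Gf oo p) - 4 * (Gf oo p) = 0"
proof -
  have "(fps_X * (1 - 16*fps_X) * fps_deriv (fps_deriv Gf) + (1 - 32*fps_X) * fps_deriv Gf - 4 * Gf) oo p = 0"
    using G_ode by simp
  thus ?thesis
    by (simp add: fps_compose_add_distrib fps_compose_sub_distrib fps_compose_mult_distrib[OF p0] p0)
qed

lemma deriv2_compose:
  fixes A p :: "complex fps"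
  assumes p0: "fps_nth p 0 = 0"
  shows "fps_deriv (fps_deriv (A oo p)) = (fps_deriv (fps_deriv A) oo p) * fps_deriv p * fps_deriv p
     + (fps_deriv A oo p) * fps_deriv (fps_deriv p)"
  using p0 by (simp add: fps_compose_deriv algebra_simps)

lemma form1: "Pf = Gf oo (2*fps_X - 16*fps_X^2)"
proof -
  define p :: "complex fps" where "p = 2*fps_X - 16*fps_X^2"
  have p0: "fps_nth p 0 = 0" by (simp add: p_def)
  have dp: "fps_deriv p = 2 - 32*fps_X" by (simp add: p_def power2_eq_square algebra_simps)
  have ddp: "fps_deriv (fps_deriv p) = -32" by (simp add: dp)
  define a where "a = fps_deriv (fps_deriv Gf) oo p"
  define b where "b = fps_deriv Gf oo p"
  define c where "c = Gf oo p"
  have dH: "fps_deriv c = b * (2 - 32*fps_X)" unfolding b_def c_def using p0 dp by (simp add: fps_compose_deriv)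
  have ddH: "fps_deriv (fps_deriv c) = a * (2 - 32*fps_X) * (2 - 32*fps_X) - 32 * b"
    unfolding a_def b_def c_def using deriv2_compose[OF p0, of Gf] dp ddp by simp
  have ode: "p * (1 - 16*p) * a + (1 - 32*p) * b - 4 * c = 0"
    unfolding a_def b_def c_def by (rule ode_compose[OF p0])
  have "Lop c = 2 * fps_X * (1 - 16*fps_X) * (p * (1 - 16*p) * a + (1 - 32*p) * b - 4 * c)"
    apply (subst Lop_alt, subst ddH, subst dH) unfolding p_def by algebra
  hence "Lop c = 0" using ode by simp
  moreover have "fps_nth c 0 = 1" by (simp add: c_def)
  ultimately have "c = Pf" by (rule Lop_unique)
  thus ?thesis by (simp add: c_def p_def)
qed

lemma form2: "Pf * (1 - 8*fps_X) = Gf oo (4 * fps_X^2 * (inverse (1 - 8*fps_X))^2)"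
proof -
  define V :: "complex fps" where "V = inverse (1 - 8*fps_X)"
  have V1: "V * (1 - 8*fps_X) = 1" unfolding V_def by (rule inverse_mult_eq_1) simp
  have V0: "fps_nth V 0 = 1" by (simp add: V_def)
  have dV: "fps_deriv V = 8 * V * V"
    unfolding V_def by (subst fps_inverse_deriv) (simp_all add: power2_eq_square)
  define p :: "complex fps" where "p = 4 * fps_X^2 * V^2"
  have p0: "fps_nth p 0 = 0" by (simp add: p_def)
  have dp: "fps_deriv p = 8 * fps_X * V * V + 64 * fps_X * fps_X * V * V * V"
    unfolding p_def by (simp add: power2_eq_square dV algebra_simps)
  have ddp: "fps_deriv (fps_deriv p) = 8 * V * V + 256 * fps_X * V * V * V + 1536 * fps_X * fps_X * V * V * V * V"
    unfolding dp by (simp add: dV algebra_simps)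
  define a where "a = fps_deriv (fps_deriv Gf) oo p"
  define b where "b = fps_deriv Gf oo p"
  define c where "c = Gf oo p"
  have dc: "fps_deriv c = b * fps_deriv p" unfolding b_def c_def using p0 by (simp add: fps_compose_deriv)
  have db: "fps_deriv b = a * fps_deriv p" unfolding a_def b_def using p0 by (simp add: fps_compose_deriv)
  have ddc: "fps_deriv (fps_deriv c) = a * fps_deriv p * fps_deriv p + b * fps_deriv (fps_deriv p)"
    unfolding a_def b_def c_def using deriv2_compose[OF p0, of Gf] by simp
  have ode: "p * (1 - 16*p) * a + (1 - 32*p) * b - 4 * c = 0"
    unfolding a_def b_def c_def by (rule ode_compose[OF p0])
  define F where "F = c * V"
  have dF: "fps_deriv F = b * fps_deriv p * V + 8 * c * V * V"
    unfolding F_def by (simp add: dc dV algebra_simps)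
  have ddF: "fps_deriv (fps_deriv F) = (a * fps_deriv p * fps_deriv p + b * fps_deriv (fps_deriv p)) * V
      + 16 * b * fps_deriv p * V * V + 128 * c * V * V * V"
    unfolding dF by (simp add: dc db dV algebra_simps)
  have "Lop F = 0"
    apply (subst Lop_alt, subst ddF, subst dF, subst ddp)
    unfolding dp F_def
    using ode V1 unfolding p_def by algebra
  moreover have "fps_nth F 0 = 1" by (simp add: F_def c_def V0)
  ultimately have "F = Pf" by (rule Lop_unique)
  hence "Pf * (1 - 8*fps_X) = c * (V * (1 - 8*fps_X))" by (simp add: F_def mult.assoc)
  also have "\<dots> = c" by (simp add: V1)
  finally show ?thesis by (simp add: c_def p_def V_def)
qed

definition Gfun :: "complex \<Rightarrow> complex" where "Gfun z = eval_fps Gf z"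

lemma Gf_radius: "fps_conv_radius Gf > 0"
proof -
  have "summable (\<lambda>n. Gf $ n * (1/32) ^ n)"
  proof (rule summable_comparison_test)
    show "summable (\<lambda>n. (1/2::real)^n)" by (rule summable_geometric) simp
    show "\<exists>N. \<forall>n\<ge>N. norm (Gf $ n * (1/32) ^ n) \<le> (1/2) ^ n"
    proof (intro exI allI impI)
      fix n :: nat
      have b: "real (2*n choose n) \<le> 4^n"
        using binomial_le_pow2[of "2*n" n] by (simp add: power_mult of_nat_le_iff[symmetric] del: of_nat_le_iff)
      have "norm (Gf $ n * (1/32) ^ n) = real (2*n choose n)^2 * (1/32)^n"
        by (simp add: Gf_def norm_mult norm_power)
      also have "\<dots> \<le> (4^n)^2 * (1/32)^n"
        by (intro mult_right_mono power_mono b) auto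
      also have "\<dots> = (16 * (1/32))^n"
      proof -
        have "((4::real)^n)^2 = (4^2)^n" by (metis power_mult mult.commute)
        thus ?thesis by (simp only: power_mult_distrib) simp
      qed
      also have "\<dots> = (1/2)^n" by simp
      finally show "norm (Gf $ n * (1/32) ^ n) \<le> (1/2) ^ n" .
    qed
  qed
  hence "fps_conv_radius Gf \<ge> norm (1/32 :: complex)"
    unfolding fps_conv_radius_def by (rule conv_radius_geI)
  thus ?thesis by (rule less_le_trans[rotated]) simp
qed

lemma Gfun_expansion: "Gfun has_fps_expansion Gf"
  unfolding Gfun_def[abs_def] by (rule eval_fps_has_fps_expansion[OF Gf_radius])

lemma poly1_expansion: "(\<lambda>x::complex. 2*x - 16*x^2) has_fps_expansion (2*fps_X - 16*fps_X^2)"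
proof -
  have "(\<lambda>x::complex. 2*x - 16*x^2) has_fps_expansion (fps_const 2 * fps_X - fps_const 16 * fps_X^2)"
    by (intro has_fps_expansion_diff has_fps_expansion_cmult_left has_fps_expansion_fps_X has_fps_expansion_power)
  thus ?thesis by (simp add: numeral_fps_const)
qed

lemma form1_exp: "(\<lambda>x. Gfun (2*x - 16*x^2)) has_fps_expansion Pf"
proof -
  have "(Gfun \<circ> (\<lambda>x::complex. 2*x - 16*x^2)) has_fps_expansion (Gf oo (2*fps_X - 16*fps_X^2))"
    by (rule has_fps_expansion_compose[OF Gfun_expansion poly1_expansion]) simp
  thus ?thesis by (simp add: form1[symmetric] o_def)
qed

lemma Pf_radius: "fps_conv_radius Pf > 0"
  using form1_exp by (simp add: has_fps_expansion_def)

lemma psi_expansion: "(\<lambda>x::complex. 4 * x^2 * (inverse (1 - 8*x))^2) has_fps_expansion (4 * fps_X^2 * (inverse (1 - 8*fps_X))^2)"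
proof -
  have "(\<lambda>x::complex. 4 * x^2 * (inverse (1 - 8 * x))^2) has_fps_expansion
         (fps_const 4 * fps_X^2 * (inverse (1 - fps_const 8 * fps_X))^2)"
    by (intro has_fps_expansion_mult has_fps_expansion_cmult_left has_fps_expansion_fps_X has_fps_expansion_power
        has_fps_expansion_inverse has_fps_expansion_diff has_fps_expansion_1) simp
  hence "(\<lambda>x::complex. 4 * x^2 * (inverse (1 - 8 * x))^2) has_fps_expansion
         (fps_const 4 * fps_X^2 * (inverse (1 - fps_const 8 * fps_X))^2)" by simp
  thus ?thesis by (simp add: numeral_fps_const)
qed

lemma form2_exp: "(\<lambda>x. Gfun (4 * x^2 * (inverse (1 - 8*x))^2)) has_fps_expansion (Pf * (1 - 8*fps_X))"
proof -
  have "(Gfun \<circ> (\<lambda>x::complex. 4 * x^2 * (inverse (1 - 8*x))^2)) has_fps_expansion (Gf oo (4 * fps_X^2 * (inverse (1 - 8*fps_X))^2))"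
    by (rule has_fps_expansion_compose[OF Gfun_expansion psi_expansion]) simp
  thus ?thesis by (simp add: form2 o_def)
qed

lemma form2b_exp: "(\<lambda>x. eval_fps Pf x * (1 - 8*x)) has_fps_expansion (Pf * (1 - 8*fps_X))"
proof -
  have "(\<lambda>x. eval_fps Pf x * (1 - 8*x)) has_fps_expansion (Pf * (1 - fps_const 8*fps_X))"
    by (intro has_fps_expansion_mult eval_fps_has_fps_expansion Pf_radius has_fps_expansion_diff
         has_fps_expansion_cmult_left has_fps_expansion_fps_X has_fps_expansion_1)
  thus ?thesis by (simp add: numeral_fps_const)
qed

lemma clf_fun:
  "\<exists>d>0. \<forall>x. norm x < d \<longrightarrow>
     (\<lambda>n. complex_of_real (clf n) * x^n) sums eval_fps Pf x \<and>
     eval_fps Pf x = Gfun (2*x - 16*x^2) \<and>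
     eval_fps Pf x * (1 - 8*x) = Gfun (4 * x^2 * (inverse (1 - 8*x))^2)"
proof -
  have ev: "eventually (\<lambda>x. eval_fps Pf x = Gfun (2*x - 16*x^2) \<and>
        eval_fps Pf x * (1 - 8*x) = Gfun (4 * x^2 * (inverse (1 - 8*x))^2)) (nhds 0)"
  proof -
    have e1: "eventually (\<lambda>x. eval_fps Pf x = Gfun (2*x - 16*x^2)) (nhds 0)"
      using form1_exp by (simp add: has_fps_expansion_def)
    have e2: "eventually (\<lambda>x. eval_fps (Pf * (1 - 8*fps_X)) x = Gfun (4 * x^2 * (inverse (1 - 8*x))^2)) (nhds 0)"
      using form2_exp by (simp add: has_fps_expansion_def)
    have e3: "eventually (\<lambda>x. eval_fps (Pf * (1 - 8*fps_X)) x = eval_fps Pf x * (1 - 8*x)) (nhds 0)"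
      using form2b_exp by (simp add: has_fps_expansion_def)
    show ?thesis using e1 e2 e3 by eventually_elim simp
  qed
  then obtain d1 where d1: "d1 > 0" "\<And>x. dist x 0 < d1 \<Longrightarrow> eval_fps Pf x = Gfun (2*x - 16*x^2) \<and>
        eval_fps Pf x * (1 - 8*x) = Gfun (4 * x^2 * (inverse (1 - 8*x))^2)"
    unfolding eventually_nhds_metric by blast
  obtain d2 where d2: "d2 > 0" "ereal d2 < fps_conv_radius Pf"
    using Pf_radius by (meson ereal_dense2 ereal_less(2) less_ereal.simps(1) zero_ereal_def)
  show ?thesis
  proof (intro exI[of _ "min d1 d2"] conjI allI impI)
    show "min d1 d2 > 0" using d1 d2 by simp
    fix x :: complex assume x: "norm x < min d1 d2"
    have "ereal (norm x) < fps_conv_radius Pf" using x d2 by (meson ereal_less_le less_ereal.simps(1) min.strict_boundedE order.strict_implies_order)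
    hence "(\<lambda>n. fps_nth Pf n * x^n) sums eval_fps Pf x" by (rule sums_eval_fps)
    thus "(\<lambda>n. complex_of_real (clf n) * x^n) sums eval_fps Pf x" by (simp add: Pf_def)
    have "dist x 0 < d1" using x by simp
    note dd = d1(2)[OF this]
    show "eval_fps Pf x = Gfun (2*x - 16*x^2)" using dd by blast
    show "eval_fps Pf x * (1 - 8*x) = Gfun (4 * x^2 * (inverse (1 - 8*x))^2)" using dd by blast
  qed
qed


fun qb :: "complex \<Rightarrow> nat \<Rightarrow> nat \<Rightarrow> complex" where
  "qb y 0 k = (if k = 0 then 1 else 0)"
| "qb y (Suc n) 0 = 1"
| "qb y (Suc n) (Suc k) = qb y n (Suc k) + y^(n-k) * qb y n k"

lemma qb_zero: "n < k \<Longrightarrow> qb y n k = 0"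
proof (induction n arbitrary: k)
  case 0 thus ?case by simp
next
  case (Suc n)
  then obtain k' where k: "k = Suc k'" by (cases k) auto
  thus ?case using Suc by simp
qed

lemma qb_n0 [simp]: "qb y n 0 = 1" by (cases n) auto

lemma qbin: "(\<Prod>j<n. 1 + x^(2*j+1) * v) = (\<Sum>k\<le>n. qb (x^2) n k * x^(k^2) * v^k)"
proof (induction n)
  case 0 thus ?case by simp
next
  case (Suc n)
  define a where "a k = qb (x^2) n k * x^(k^2) * v^k" for k
  have "(\<Prod>j<Suc n. 1 + x^(2*j+1) * v) = (\<Sum>k\<le>n. a k) * (1 + x^(2*n+1) * v)"
    using Suc by (simp add: a_def)
  also have "\<dots> = (\<Sum>k\<le>n. a k) + (\<Sum>k\<le>n. a k * x^(2*n+1) * v)"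
    by (simp add: algebra_simps sum_distrib_left sum_distrib_right)
  also have "(\<Sum>k\<le>n. a k) = 1 + (\<Sum>k\<le>n. qb (x^2) n (Suc k) * x^((Suc k)^2) * v^(Suc k))"
  proof -
    have "(\<Sum>k\<le>Suc n. a k) = a 0 + (\<Sum>k\<le>n. a (Suc k))" by (rule sum.atMost_Suc_shift)
    moreover have "(\<Sum>k\<le>Suc n. a k) = (\<Sum>k\<le>n. a k)" by (simp add: a_def qb_zero)
    ultimately show ?thesis by (simp add: a_def)
  qed
  also have "(\<Sum>k\<le>n. a k * x^(2*n+1) * v) = (\<Sum>k\<le>n. (x^2)^(n-k) * qb (x^2) n k * x^((Suc k)^2) * v^(Suc k))"
  proof (rule sum.cong[OF refl])
    fix k assume "k \<in> {..n}"
    hence k: "k \<le> n" by simp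
    have e: "2*(n-k) + (Suc k)^2 = k^2 + (2*n+1)" using k by (simp add: power2_eq_square algebra_simps)
    have "(x^2)^(n-k) * x^((Suc k)^2) = x^(k^2) * x^(2*n+1)"
      by (simp only: power_mult[symmetric] power_add[symmetric] e)
    thus "a k * x^(2*n+1) * v = (x^2)^(n-k) * qb (x^2) n k * x^((Suc k)^2) * v^(Suc k)"
      unfolding a_def by (simp add: algebra_simps)
  qed
  also have "1 + (\<Sum>k\<le>n. qb (x^2) n (Suc k) * x^((Suc k)^2) * v^(Suc k)) +
      (\<Sum>k\<le>n. (x^2)^(n-k) * qb (x^2) n k * x^((Suc k)^2) * v^(Suc k))
    = 1 + (\<Sum>k\<le>n. qb (x^2) (Suc n) (Suc k) * x^((Suc k)^2) * v^(Suc k))"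
    by (simp add: sum.distrib[symmetric] algebra_simps)
  also have "\<dots> = (\<Sum>k\<le>Suc n. qb (x^2) (Suc n) k * x^(k^2) * v^k)"
    by (subst sum.atMost_Suc_shift) simp
  finally show ?case .
qed

definition poch :: "complex \<Rightarrow> nat \<Rightarrow> complex" where
  "poch y m = (\<Prod>i<m. 1 - y^(i+1))"

lemma poch_0 [simp]: "poch y 0 = 1" by (simp add: poch_def)
lemma poch_Suc: "poch y (Suc m) = poch y m * (1 - y^(Suc m))" by (simp add: poch_def)

lemma qb_closed: "k \<le> n \<Longrightarrow> qb y n k * poch y k * poch y (n-k) = poch y n"
proof (induction n arbitrary: k)
  case 0 thus ?case by simp
next
  case (Suc n)
  show ?case
  proof (cases k)
    case 0 thus ?thesis by simp
  next
    case (Suc k')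
    show ?thesis
    proof (cases "k' = n")
      case True
      have ih: "qb y n n * poch y n = poch y n" using Suc.IH[of n] by simp
      have q: "qb y (Suc n) (Suc n) = qb y n n" by (simp add: qb_zero)
      have "qb y (Suc n) k * poch y k * poch y (Suc n - k) = (qb y n n * poch y n) * (1 - y^(Suc n))"
        using True Suc by (simp only: q poch_Suc) simp
      thus ?thesis using ih by (simp add: poch_Suc)
    next
      case False
      hence k'n: "k' < n" using Suc Suc.prems by simp
      have ih1: "qb y n (Suc k') * poch y (Suc k') * poch y (n - Suc k') = poch y n"
        using Suc.IH[of "Suc k'"] k'n by simp
      have ih2: "qb y n k' * poch y k' * poch y (n - k') = poch y n"
        using Suc.IH[of k'] k'n by simp
      have p1: "poch y (n - k') = poch y (n - Suc k') * (1 - y^(n-k'))"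
        using poch_Suc[of y "n - Suc k'"] k'n by (simp add: Suc_diff_Suc)
      have p2: "poch y (Suc k') = poch y k' * (1 - y^(Suc k'))" by (rule poch_Suc)
      have yy: "y^(n-k') * y^(Suc k') = y^(Suc n)"
        using k'n by (simp add: power_add[symmetric])
      have "qb y (Suc n) k * poch y k * poch y (Suc n - k)
          = (qb y n (Suc k') * poch y (Suc k') * poch y (n - Suc k')) * (1 - y^(n-k'))
            + y^(n-k') * (1 - y^(Suc k')) * (qb y n k' * poch y k' * poch y (n - k'))"
        using Suc by (simp add: p1 p2 algebra_simps)
      also have "\<dots> = poch y n * (1 - y^(Suc n))"
        unfolding ih1 ih2 using yy by (simp add: algebra_simps) auto
      finally show ?thesis by (simp add: poch_Suc)
    qed
  qed
qed

definition Ep :: "complex \<Rightarrow> complex" where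
  "Ep x = prodinf (\<lambda>n. 1 - x^(n+1))"

lemma Ep_conv: fixes x :: complex assumes "norm x < 1" shows "convergent_prod (\<lambda>n. 1 - x^(n+1))"
proof -
  have "summable (\<lambda>n. norm x * norm x ^ n)"
    using assms by (intro summable_mult summable_geometric) simp
  moreover have "norm ((1 - x^(n+1)) - 1) = norm x * norm x ^ n" for n
    by (simp add: norm_mult norm_power)
  ultimately have "summable (\<lambda>n. norm ((1 - x^(n+1)) - 1))" by simp
  hence "abs_convergent_prod (\<lambda>n. 1 - x^(n+1))" by (rule summable_imp_abs_convergent_prod)
  thus ?thesis by (rule abs_convergent_prod_imp_convergent_prod)
qed

lemma Ep_lim: fixes x :: complex assumes "norm x < 1" shows "poch x \<longlonglongrightarrow> Ep x"
proof -
  have "(\<lambda>n. \<Prod>i\<le>n. 1 - x^(i+1)) \<longlonglongrightarrow> Ep x"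
    unfolding Ep_def by (rule convergent_prod_LIMSEQ[OF Ep_conv[OF assms]])
  hence "(\<lambda>n. poch x (Suc n)) \<longlonglongrightarrow> Ep x"
    by (simp add: poch_def lessThan_Suc_atMost)
  thus ?thesis by (rule LIMSEQ_imp_Suc)
qed

lemma Ep_nz: fixes x :: complex assumes "norm x < 1" shows "Ep x \<noteq> 0"
  unfolding Ep_def
proof (rule prodinf_nonzero[OF Ep_conv[OF assms]])
  fix i
  have "norm x ^ (i+1) < 1" using assms by (simp add: power_less_one_iff del: power_Suc)
  hence "norm (x^(i+1)) < 1" by (simp only: norm_power)
  thus "1 - x^(i+1) \<noteq> 0" by auto
qed

lemma prod_split_add: "(\<Prod>j<(a::nat)+b. g j) = (\<Prod>j<a. g j) * (\<Prod>i<b. g (a+i))"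
  by (induction b) (simp_all add: mult.assoc)

lemma sum_split_add: "(\<Sum>j<(a::nat)+b. g j) = (\<Sum>j<a. g j) + (\<Sum>i<b. g (a+i))"
  by (induction b) (simp_all add: add.assoc)

lemma prod_reflect: "(\<Prod>i<N. g (N - Suc i)) = (\<Prod>j<N. g j)"
  by (rule prod.reindex_bij_witness[of _ "\<lambda>j. N - Suc j" "\<lambda>i. N - Suc i"]) auto

lemma sum_reflect: "(\<Sum>i<N. g (N - Suc i)) = (\<Sum>j<N. g j)"
  by (rule sum.reindex_bij_witness[of _ "\<lambda>j. N - Suc j" "\<lambda>i. N - Suc i"]) auto

lemma prod_odd_pow: "(\<Prod>i<N. z / x^(2*i+1)) = z^N / (x::complex)^(N^2)"
proof (induction N)
  case 0 thus ?case by simp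
next
  case (Suc N)
  have e: "(Suc N)^2 = N^2 + (2*N+1)" by (simp add: power2_eq_square)
  show ?case using Suc by (simp add: e power_add mult_ac)
qed

lemma finite_jtp:
  fixes x z :: complex
  assumes x: "x \<noteq> 0" and z: "z \<noteq> 0"
  shows "(\<Prod>i<N. (1 + x^(2*i+1)*z) * (1 + x^(2*i+1)/z)) =
     (\<Sum>j\<le>N. qb (x^2) (2*N) (N+j) * x^(j^2) * z^j) +
     (\<Sum>j<N. qb (x^2) (2*N) (N - Suc j) * x^((Suc j)^2) / z^(Suc j))"
proof -
  define vv where "vv = z / x^(2*N)"
  define C where "C = z^N / x^(N^2)"
  have C0: "C \<noteq> 0" using x z by (simp add: C_def)
  have Q: "(\<Prod>j<(2*N). 1 + x^(2*j+1)* vv) = (\<Sum>k\<le>(2*N). qb (x^2) (2*N) k * x^(k^2) * vv^k)"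
    by (rule qbin)
  have L1: "(\<Prod>i<N. 1 + x^(2*(N+i)+1)* vv) = (\<Prod>i<N. 1 + x^(2*i+1)*z)"
  proof (rule prod.cong[OF refl])
    fix i
    have "x^(2*(N+i)+1) = x^(2*N) * x^(2*i+1)" by (simp add: power_add[symmetric])
    thus "1 + x^(2*(N+i)+1)* vv = 1 + x^(2*i+1)*z" using x by (simp add: vv_def)
  qed
  have L2: "(\<Prod>j<N. 1 + x^(2*j+1)* vv) = (\<Prod>i<N. (z / x^(2*i+1)) * (1 + x^(2*i+1)/z))"
  proof -
    have "(\<Prod>j<N. 1 + x^(2*j+1)* vv) = (\<Prod>i<N. 1 + x^(2*(N - Suc i)+1)* vv)"
      by (rule prod_reflect[symmetric])
    also have "\<dots> = (\<Prod>i<N. (z / x^(2*i+1)) * (1 + x^(2*i+1)/z))"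
    proof (rule prod.cong[OF refl])
      fix i assume "i \<in> {..<N}"
      hence i: "i < N" by simp
      have e: "2*(N - Suc i)+1 + (2*i+1) = 2*N" using i by simp
      have "x^(2*(N - Suc i)+1) * x^(2*i+1) = x^(2*N)"
        by (simp only: power_add[symmetric] e)
      hence "x^(2*(N - Suc i)+1) * vv = z / x^(2*i+1)"
        using x unfolding vv_def by (simp add: field_simps)
      thus "1 + x^(2*(N - Suc i)+1)* vv = (z / x^(2*i+1)) * (1 + x^(2*i+1)/z)"
        using x z by (simp add: field_simps)
    qed
    finally show ?thesis .
  qed
  have LHS: "(\<Prod>j<(2*N). 1 + x^(2*j+1)* vv) = C * (\<Prod>i<N. (1 + x^(2*i+1)*z) * (1 + x^(2*i+1)/z))"
  proof -
    have "(\<Prod>j<(2*N). 1 + x^(2*j+1)* vv) = (\<Prod>j<N. 1 + x^(2*j+1)* vv) * (\<Prod>i<N. 1 + x^(2*(N+i)+1)* vv)"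
      using prod_split_add[of "\<lambda>j. 1 + x^(2*j+1)* vv" N N] by (simp add: mult_2)
    also have "\<dots> = (\<Prod>i<N. z / x^(2*i+1)) * (\<Prod>i<N. 1 + x^(2*i+1)/z) * (\<Prod>i<N. 1 + x^(2*i+1)*z)"
      unfolding L1 L2 prod.distrib by simp
    also have "\<dots> = C * (\<Prod>i<N. (1 + x^(2*i+1)*z) * (1 + x^(2*i+1)/z))"
      unfolding prod_odd_pow C_def prod.distrib by (simp add: mult_ac)
    finally show ?thesis .
  qed
  define t where "t k = qb (x^2) (2*N) k * x^(k^2) * vv^k" for k
  have R1: "t (N+j) = C * (qb (x^2) (2*N) (N+j) * x^(j^2) * z^j)" for j
  proof -
    have e: "(N+j)^2 + N^2 = j^2 + 2*N*(N+j)" by (simp add: power2_eq_square algebra_simps)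
    have "x^((N+j)^2) * x^(N^2) = x^(j^2) * x^(2*N*(N+j))" by (simp add: power_add[symmetric] e)
    moreover have "vv^(N+j) = z^N * z^j / x^(2*N*(N+j))" by (simp add: vv_def power_divide power_add power_mult)
    ultimately show ?thesis using x unfolding t_def C_def by (simp add: field_simps)
  qed
  have R2: "t (N - Suc j) = C * (qb (x^2) (2*N) (N - Suc j) * x^((Suc j)^2) / z^(Suc j))" if j: "j < N" for j
  proof -
    define k where "k = N - Suc j"
    have N: "N = k + Suc j" using j by (simp add: k_def)
    have e: "k^2 + N^2 = (Suc j)^2 + 2*N*k" unfolding N by (simp add: power2_eq_square algebra_simps)
    have "x^(k^2) * x^(N^2) = x^((Suc j)^2) * x^(2*N*k)" by (simp add: power_add[symmetric] e)
    moreover have "z^k * z^(Suc j) = z^N" unfolding N by (simp add: power_add)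
    moreover have "vv^k * x^(2*N*k) = z^k" using x by (simp add: vv_def power_divide power_mult)
    ultimately have h: "x^(k^2) * x^(N^2) = x^((Suc j)^2) * x^(2*N*k)" "z^k * z^(Suc j) = z^N"
       "vv^k * x^(2*N*k) = z^k" by auto
    define D where "D = x^(N^2) * z^(Suc j) * x^(2*N*k)"
    have D0: "D \<noteq> 0" using x z by (simp add: D_def)
    have "C * (x^((Suc j)^2) / z^(Suc j)) * D = z^N * x^((Suc j)^2) * x^(2*N*k)"
      using x z unfolding C_def D_def by (simp add: field_simps)
    moreover have "(x^(k^2) * vv^k) * D = z^N * x^((Suc j)^2) * x^(2*N*k)"
    proof -
      have "(x^(k^2) * vv^k) * D = (x^(k^2) * x^(N^2)) * (vv^k * x^(2*N*k)) * z^(Suc j)"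
        unfolding D_def by (simp add: mult_ac)
      also have "\<dots> = x^((Suc j)^2) * x^(2*N*k) * (z^k * z^(Suc j))" unfolding h(1) h(3) by (simp add: mult_ac)
      finally show ?thesis unfolding h(2) by (simp add: mult_ac)
    qed
    ultimately have "(x^(k^2) * vv^k) * D = (C * (x^((Suc j)^2) / z^(Suc j))) * D"
      by (simp only:)
    hence hh: "x^(k^2) * vv^k = C * (x^((Suc j)^2) / z^(Suc j))"
      using D0 by (simp only: mult_cancel_right) simp
    have "t k = qb (x^2) (2*N) k * (x^(k^2) * vv^k)" unfolding t_def by (simp only: mult.assoc)
    also have "\<dots> = qb (x^2) (2*N) k * (C * (x^((Suc j)^2) / z^(Suc j)))" by (simp only: hh)
    finally have F: "t k = qb (x^2) (2*N) k * (C * (x^((Suc j)^2) / z^(Suc j)))" .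
    have e: "\<And>q c a b :: complex. q * (c * (a/b)) = c * (q*a/b)" by simp
    show ?thesis unfolding k_def[symmetric] F by (rule e)
  qed
  have RHS: "(\<Sum>k\<le>(2*N). t k) = C * ((\<Sum>j\<le>N. qb (x^2) (2*N) (N+j) * x^(j^2) * z^j) +
     (\<Sum>j<N. qb (x^2) (2*N) (N - Suc j) * x^((Suc j)^2) / z^(Suc j)))"
  proof -
    have "(\<Sum>k\<le>(2*N). t k) = (\<Sum>k<N + Suc N. t k)"
      by (simp add: lessThan_Suc_atMost[symmetric] mult_2)
    also have "\<dots> = (\<Sum>k<N. t k) + (\<Sum>j<Suc N. t (N+j))" by (rule sum_split_add)
    also have "(\<Sum>k<N. t k) = (\<Sum>j<N. t (N - Suc j))" by (rule sum_reflect[symmetric])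
    also have "\<dots> = (\<Sum>j<N. C * (qb (x^2) (2*N) (N - Suc j) * x^((Suc j)^2) / z^(Suc j)))"
      by (rule sum.cong[OF refl]) (simp add: R2)
    also have "(\<Sum>j<Suc N. t (N+j)) = (\<Sum>j\<le>N. C * (qb (x^2) (2*N) (N+j) * x^(j^2) * z^j))"
      by (simp add: lessThan_Suc_atMost R1)
    finally show ?thesis by (simp only: sum_distrib_left[symmetric] distrib_left add.commute)
  qed
  have "C * (\<Prod>i<N. (1 + x^(2*i+1)*z) * (1 + x^(2*i+1)/z)) = C * ((\<Sum>j\<le>N. qb (x^2) (2*N) (N+j) * x^(j^2) * z^j) +
     (\<Sum>j<N. qb (x^2) (2*N) (N - Suc j) * x^((Suc j)^2) / z^(Suc j)))"
  proof -
    have "C * (\<Prod>i<N. (1 + x^(2*i+1)*z) * (1 + x^(2*i+1)/z)) = (\<Prod>j<(2*N). 1 + x^(2*j+1)* vv)"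
      using LHS by simp
    also have "\<dots> = (\<Sum>k\<le>(2*N). t k)" using Q by (simp add: t_def)
    also note RHS
    finally show ?thesis .
  qed
  thus ?thesis using C0 mult_left_cancel by blast
qed

lemma summable_theta:
  fixes r s :: real
  assumes r: "0 \<le> r" "r < 1" and s: "0 \<le> s"
  shows "summable (\<lambda>j. r^(j^2) * s^j)"
proof -
  have "(\<lambda>j. r^j * s) \<longlonglongrightarrow> 0 * s"
    by (intro tendsto_mult LIMSEQ_power_zero tendsto_const) (use r in auto)
  hence "eventually (\<lambda>j. r^j * s < 1/2) sequentially"
    by (intro order_tendstoD) auto
  then obtain N where N: "\<And>j. j \<ge> N \<Longrightarrow> r^j * s < 1/2"
    unfolding eventually_sequentially by blast
  show ?thesis
  proof (rule summable_comparison_test)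
    show "summable (\<lambda>j. (1/2::real)^j)" by (rule summable_geometric) simp
    show "\<exists>N. \<forall>n\<ge>N. norm (r^(n^2) * s^n) \<le> (1/2)^n"
    proof (intro exI allI impI)
      fix n assume "n \<ge> N"
      hence h: "r^n * s < 1/2" by (rule N)
      have "r^(n^2) * s^n = (r^n * s)^n" by (simp add: power2_eq_square power_mult power_mult_distrib)
      also have "\<dots> \<le> (1/2)^n" using h r s by (intro power_mono) auto
      finally show "norm (r^(n^2) * s^n) \<le> (1/2)^n" using r s by simp
    qed
  qed
qed

lemma poch_nz: fixes y :: complex assumes "norm y < 1" shows "poch y m \<noteq> 0"
proof -
  have "1 - y^(i+1) \<noteq> 0" for i
  proof -
    have "norm y ^ (i+1) < 1" using assms by (simp add: power_less_one_iff del: power_Suc)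
    hence "norm (y^(i+1)) < 1" by (simp only: norm_power)
    thus ?thesis by auto
  qed
  thus ?thesis by (simp add: poch_def)
qed

lemma qb_eq: fixes y :: complex assumes "norm y < 1" "k \<le> n"
  shows "qb y n k = poch y n * inverse (poch y k) * inverse (poch y (n-k))"
  using qb_closed[OF assms(2), of y] poch_nz[OF assms(1)] by (simp add: field_simps)

lemma qb_bound: fixes y :: complex assumes y: "norm y < 1"
  shows "\<exists>M>0. \<forall>n k. norm (qb y n k) \<le> M"
proof -
  have c1: "convergent (poch y)" using Ep_lim[OF y] by (auto simp: convergent_def)
  have "(\<lambda>m. inverse (poch y m)) \<longlonglongrightarrow> inverse (Ep y)"
    by (rule tendsto_inverse[OF Ep_lim[OF y] Ep_nz[OF y]])
  hence c2: "convergent (\<lambda>m. inverse (poch y m))" by (auto simp: convergent_def)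
  obtain K1 where K1: "K1 > 0" "\<And>m. norm (poch y m) \<le> K1"
    using convergent_imp_Bseq[OF c1] by (auto simp: Bseq_def)
  obtain K2 where K2: "K2 > 0" "\<And>m. norm (inverse (poch y m)) \<le> K2"
    using convergent_imp_Bseq[OF c2] by (auto simp: Bseq_def)
  show ?thesis
  proof (intro exI[of _ "K1 * K2 * K2"] conjI allI)
    show "K1 * K2 * K2 > 0" using K1 K2 by simp
    fix n k
    show "norm (qb y n k) \<le> K1 * K2 * K2"
    proof (cases "k \<le> n")
      case True
      have "norm (qb y n k) = norm (poch y n) * norm (inverse (poch y k)) * norm (inverse (poch y (n-k)))"
        by (simp add: qb_eq[OF y True] norm_mult)
      also have "\<dots> \<le> K1 * K2 * K2"
        by (intro mult_mono K1 K2) (use K1 K2 in auto)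
      finally show ?thesis .
    next
      case False
      thus ?thesis using qb_zero[of n k y] K1 K2 by simp
    qed
  qed
qed

lemma tendsto_nat_comp:
  assumes "f \<longlonglongrightarrow> L" "\<And>N. N \<le> g N + (c::nat)"
  shows "(\<lambda>N. f (g N :: nat)) \<longlonglongrightarrow> L"
proof -
  have "\<exists>N0. \<forall>N\<ge>N0. g N \<ge> M" for M
    using assms(2) by (intro exI[of _ "M + c"]) (metis add_le_cancel_right le_trans)
  hence "filterlim g sequentially sequentially"
    unfolding filterlim_at_top eventually_sequentially by blast
  thus ?thesis by (rule filterlim_compose[OF assms(1)])
qed

lemma qb_lim1: fixes y :: complex assumes y: "norm y < 1"
  shows "(\<lambda>N. qb y (2*N) (N+j)) \<longlonglongrightarrow> inverse (Ep y)"
proof -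
  have "(\<lambda>N. poch y (2*N) * inverse (poch y (N+j)) * inverse (poch y (N-j))) \<longlonglongrightarrow> Ep y * inverse (Ep y) * inverse (Ep y)"
  proof (intro tendsto_mult tendsto_inverse)
    show "(\<lambda>N. poch y (2*N)) \<longlonglongrightarrow> Ep y"
      by (rule tendsto_nat_comp[OF Ep_lim[OF y], of _ 0]) simp
    show "(\<lambda>N. poch y (N+j)) \<longlonglongrightarrow> Ep y"
      by (rule tendsto_nat_comp[OF Ep_lim[OF y], of _ 0]) simp
    show "(\<lambda>N. poch y (N-j)) \<longlonglongrightarrow> Ep y"
      by (rule tendsto_nat_comp[OF Ep_lim[OF y], of _ j]) simp
  qed (use Ep_nz[OF y] in auto)
  hence l: "(\<lambda>N. poch y (2*N) * inverse (poch y (N+j)) * inverse (poch y (N-j))) \<longlonglongrightarrow> inverse (Ep y)"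
    using Ep_nz[OF y] by simp
  have "eventually (\<lambda>N. poch y (2*N) * inverse (poch y (N+j)) * inverse (poch y (N-j)) = qb y (2*N) (N+j)) sequentially"
    unfolding eventually_sequentially
  proof (intro exI[of _ j] allI impI)
    fix N assume "N \<ge> j"
    hence "N + j \<le> 2*N" by simp
    thus "poch y (2*N) * inverse (poch y (N+j)) * inverse (poch y (N-j)) = qb y (2*N) (N+j)"
      using qb_eq[OF y] \<open>N \<ge> j\<close> by simp
  qed
  thus ?thesis using l by (rule Lim_transform_eventually[rotated])
qed

lemma qb_lim2: fixes y :: complex assumes y: "norm y < 1"
  shows "(\<lambda>N. qb y (2*N) (N - Suc j)) \<longlonglongrightarrow> inverse (Ep y)"
proof -
  have "(\<lambda>N. poch y (2*N) * inverse (poch y (N - Suc j)) * inverse (poch y (N + Suc j))) \<longlonglongrightarrow> Ep y * inverse (Ep y) * inverse (Ep y)"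
  proof (intro tendsto_mult tendsto_inverse)
    show "(\<lambda>N. poch y (2*N)) \<longlonglongrightarrow> Ep y"
      by (rule tendsto_nat_comp[OF Ep_lim[OF y], of _ 0]) simp
    show "(\<lambda>N. poch y (N + Suc j)) \<longlonglongrightarrow> Ep y"
      by (rule tendsto_nat_comp[OF Ep_lim[OF y], of _ 0]) simp
    show "(\<lambda>N. poch y (N - Suc j)) \<longlonglongrightarrow> Ep y"
      by (rule tendsto_nat_comp[OF Ep_lim[OF y], of _ "Suc j"]) simp
  qed (use Ep_nz[OF y] in auto)
  hence l: "(\<lambda>N. poch y (2*N) * inverse (poch y (N - Suc j)) * inverse (poch y (N + Suc j))) \<longlonglongrightarrow> inverse (Ep y)"
    using Ep_nz[OF y] by simp
  have "eventually (\<lambda>N. poch y (2*N) * inverse (poch y (N - Suc j)) * inverse (poch y (N + Suc j)) = qb y (2*N) (N - Suc j)) sequentially"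
    unfolding eventually_sequentially
  proof (intro exI[of _ "Suc j"] allI impI)
    fix N assume N: "N \<ge> Suc j"
    have "N - Suc j \<le> 2*N" by simp
    moreover have "2*N - (N - Suc j) = N + Suc j" using N by simp
    ultimately show "poch y (2*N) * inverse (poch y (N - Suc j)) * inverse (poch y (N + Suc j)) = qb y (2*N) (N - Suc j)"
      using qb_eq[OF y] by metis
  qed
  thus ?thesis using l by (rule Lim_transform_eventually[rotated])
qed

lemma tannery_seq:
  fixes c :: "nat \<Rightarrow> nat \<Rightarrow> complex" and w :: "nat \<Rightarrow> complex"
  assumes lim: "\<And>j. (\<lambda>N. c N j) \<longlonglongrightarrow> L"
    and bnd: "\<And>N j. norm (c N j) \<le> M"
    and sw: "summable (\<lambda>j. norm (w j))"
    and d: "\<And>N. d N \<ge> N"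
  shows "(\<lambda>N. \<Sum>j<d N. c N j * w j) \<longlonglongrightarrow> L * (\<Sum>j. w j)"
proof -
  define a where "a j N = (if j < d N then c N j * w j else 0)" for j N
  have 1: "(\<lambda>N. a j N) \<longlonglongrightarrow> L * w j" for j
  proof -
    have "(\<lambda>N. c N j * w j) \<longlonglongrightarrow> L * w j" by (intro tendsto_mult lim tendsto_const)
    moreover have "eventually (\<lambda>N. c N j * w j = a j N) sequentially"
      unfolding eventually_sequentially a_def
      by (intro exI[of _ "Suc j"] allI impI) (use d in \<open>auto intro: less_le_trans\<close>)
    ultimately show ?thesis by (rule Lim_transform_eventually)
  qed
  have 2: "eventually (\<lambda>(j, N). norm (a j N) \<le> M * norm (w j)) (at_top \<times>\<^sub>F sequentially)"
  proof (intro always_eventually allI)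
    fix p :: "nat \<times> nat"
    obtain j N where p: "p = (j, N)" by (cases p)
    have "M \<ge> 0" using bnd[of 0 0] norm_ge_zero[of "c 0 0"] by linarith
    hence "norm (a j N) \<le> M * norm (w j)"
      unfolding a_def using bnd by (auto simp: norm_mult intro: mult_right_mono)
    thus "case p of (j, N) \<Rightarrow> norm (a j N) \<le> M * norm (w j)" by (simp add: p)
  qed
  have 3: "summable (\<lambda>j. M * norm (w j))" by (intro summable_mult sw)
  have "((\<lambda>N. suminf (\<lambda>j. a j N)) \<longlonglongrightarrow> suminf (\<lambda>j. L * w j))"
    using tannerys_theorem[OF 1 2 3 trivial_limit_sequentially] by (elim conjE)
  moreover have "suminf (\<lambda>j. a j N) = (\<Sum>j<d N. c N j * w j)" for N
    by (subst suminf_finite[of "{..<d N}"]) (simp_all add: a_def)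
  moreover have "suminf (\<lambda>j. L * w j) = L * (\<Sum>j. w j)"
    by (rule suminf_mult[OF summable_norm_cancel[OF sw]])
  ultimately show ?thesis by simp
qed

lemma jtp_lim:
  fixes x z :: complex
  assumes x1: "norm x < 1" and x0: "x \<noteq> 0" and z0: "z \<noteq> 0"
  shows "(\<lambda>N. \<Prod>i<N. (1 + x^(2*i+1)*z) * (1 + x^(2*i+1)/z)) \<longlonglongrightarrow>
     inverse (Ep (x^2)) * ((\<Sum>j. x^(j^2) * z^j) + (\<Sum>j. x^((Suc j)^2) / z^(Suc j)))"
proof -
  define y where "y = x^2"
  have y: "norm y < 1" using x1 by (simp add: y_def norm_power power_less_one_iff)
  obtain M where M: "M > 0" "\<And>n k. norm (qb y n k) \<le> M" using qb_bound[OF y] by blast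
  have s1: "summable (\<lambda>j. norm (x^(j^2) * z^j))"
    using summable_theta[of "norm x" "norm z"] x1 by (simp add: norm_mult norm_power)
  have s2: "summable (\<lambda>j. norm (x^((Suc j)^2) / z^(Suc j)))"
  proof -
    have "summable (\<lambda>j. norm x^(j^2) * (inverse (norm z))^j)"
      using summable_theta[of "norm x" "inverse (norm z)"] x1 by simp
    hence "summable (\<lambda>j. norm x^((Suc j)^2) * (inverse (norm z))^(Suc j))"
      by (subst summable_Suc_iff)
    thus ?thesis by (simp add: norm_mult norm_power norm_divide field_simps)
  qed
  have A: "(\<lambda>N. \<Sum>j<Suc N. qb y (2*N) (N+j) * (x^(j^2) * z^j)) \<longlonglongrightarrow> inverse (Ep y) * (\<Sum>j. x^(j^2) * z^j)"
    by (rule tannery_seq[OF qb_lim1[OF y] M(2) s1]) simp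
  have B: "(\<lambda>N. \<Sum>j<N. qb y (2*N) (N - Suc j) * (x^((Suc j)^2) / z^(Suc j))) \<longlonglongrightarrow> inverse (Ep y) * (\<Sum>j. x^((Suc j)^2) / z^(Suc j))"
    by (rule tannery_seq[OF qb_lim2[OF y] M(2) s2]) simp
  have "(\<lambda>N. (\<Sum>j<Suc N. qb y (2*N) (N+j) * (x^(j^2) * z^j)) + (\<Sum>j<N. qb y (2*N) (N - Suc j) * (x^((Suc j)^2) / z^(Suc j))))
      \<longlonglongrightarrow> inverse (Ep y) * (\<Sum>j. x^(j^2) * z^j) + inverse (Ep y) * (\<Sum>j. x^((Suc j)^2) / z^(Suc j))"
    by (rule tendsto_add[OF A B])
  moreover have "(\<Sum>j<Suc N. qb y (2*N) (N+j) * (x^(j^2) * z^j)) + (\<Sum>j<N. qb y (2*N) (N - Suc j) * (x^((Suc j)^2) / z^(Suc j)))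
      = (\<Prod>i<N. (1 + x^(2*i+1)*z) * (1 + x^(2*i+1)/z))" for N
    unfolding finite_jtp[OF x0 z0] y_def lessThan_Suc_atMost by (simp add: mult.assoc)
  ultimately show ?thesis by (simp add: y_def distrib_left)
qed


definition th3 :: "complex \<Rightarrow> complex" where
  "th3 x = (\<Sum>j. x^(j^2)) + (\<Sum>j. x^((Suc j)^2))"

definition T2 :: "complex \<Rightarrow> complex" where
  "T2 x = 2 * (\<Sum>j. x^(j^2+j))"

definition oddp :: "complex \<Rightarrow> nat \<Rightarrow> complex" where
  "oddp x N = (\<Prod>i<N. 1 - x^(2*i+1))"

lemma poch_double: fixes x :: complex shows "poch x (2*N) = poch (x^2) N * oddp x N"
proof (induction N)
  case 0 thus ?case by (simp add: oddp_def)
next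
  case (Suc N)
  have e: "2 * Suc N = Suc (Suc (2*N))" by simp
  have "poch x (2 * Suc N) = poch x (2*N) * (1 - x^(Suc (2*N))) * (1 - x^(Suc (Suc (2*N))))"
    unfolding e poch_Suc by simp
  also have "x^(Suc (Suc (2*N))) = (x^2)^(Suc N)"
  proof -
    have "(x^2)^(Suc N) = x^(2*Suc N)" by (rule power_mult[symmetric])
    thus ?thesis by (simp only: e)
  qed
  also have "poch x (2*N) * (1 - x^(Suc (2*N))) * (1 - (x^2)^(Suc N))
      = (poch (x^2) N * (1 - (x^2)^(Suc N))) * (oddp x N * (1 - x^(2*N+1)))"
    unfolding Suc by (simp add: mult_ac)
  also have "\<dots> = poch (x^2) (Suc N) * oddp x (Suc N)"
    by (simp add: poch_Suc oddp_def)
  finally show ?case .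
qed

lemma oddp_plus: fixes x :: complex shows "(\<Prod>i<N. 1 + x^(2*i+1)) * oddp x N = oddp (x^2) N"
proof -
  have "(1 + x^(2*i+1)) * (1 - x^(2*i+1)) = 1 - (x^2)^(2*i+1)" for i
  proof -
    have "(x^2)^(2*i+1) = x^(2*i+1) * x^(2*i+1)"
      by (simp only: power_mult[symmetric] power_add[symmetric]) (simp add: algebra_simps)
    thus ?thesis by (simp add: algebra_simps)
  qed
  thus ?thesis by (simp add: oddp_def prod.distrib[symmetric])
qed

lemma even_plus: fixes x :: complex shows "(\<Prod>i<N. 1 + x^(2*i+2)) * poch (x^2) N = poch (x^4) N"
proof -
  have "(1 + x^(2*i+2)) * (1 - (x^2)^(i+1)) = 1 - (x^4)^(i+1)" for i
  proof -
    have "(x^2)^(i+1) = x^(2*i+2)" by (simp only: power_mult[symmetric]) (simp add: algebra_simps)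
    moreover have "(x^4)^(i+1) = x^(2*i+2) * x^(2*i+2)"
    proof -
      have "(x^4)^(i+1) = x^(4*(i+1))" by (rule power_mult[symmetric])
      also have "4*(i+1) = (2*i+2) + (2*i+2)" by simp
      finally show ?thesis by (simp only: power_add)
    qed
    ultimately show ?thesis by (simp add: algebra_simps)
  qed
  thus ?thesis by (simp add: poch_def prod.distrib[symmetric])
qed

lemma evenp_shift: fixes x :: complex shows "(\<Prod>i<N. 1 + x^(2*i)) * (1 + x^(2*N)) = 2 * (\<Prod>i<N. 1 + x^(2*i+2))"
proof (induction N)
  case 0 thus ?case by simp
next
  case (Suc N)
  have "(\<Prod>i<Suc N. 1 + x^(2*i)) * (1 + x^(2*Suc N)) = ((\<Prod>i<N. 1 + x^(2*i)) * (1 + x^(2*N))) * (1 + x^(2*N+2))"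
    by (simp only: prod.lessThan_Suc) (simp add: mult_ac)
  also have "\<dots> = 2 * (\<Prod>i<Suc N. 1 + x^(2*i+2))" unfolding Suc by (simp only: prod.lessThan_Suc mult.assoc)
  finally show ?case .
qed

lemma Ep_0 [simp]: "Ep 0 = 1" by (simp add: Ep_def)

lemma th3_0 [simp]: "th3 0 = 1"
proof -
  have "(\<Sum>j. (0::complex)^(j^2)) = (\<Sum>j\<in>{0}. (0::complex)^(j^2))"
    by (rule suminf_finite) auto
  moreover have "(\<Sum>j. (0::complex)^((Suc j)^2)) = 0"
  proof -
    have "(\<lambda>j. (0::complex)^((Suc j)^2)) = (\<lambda>j. 0)" by (rule ext) (simp add: power_0_left)
    thus ?thesis by simp
  qed
  ultimately show ?thesis by (simp add: th3_def)
qed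

lemma T2_0 [simp]: "T2 0 = 2"
proof -
  have "(\<Sum>j. (0::complex)^(j^2+j)) = (\<Sum>j\<in>{0}. (0::complex)^(j^2+j))"
    by (rule suminf_finite) auto
  thus ?thesis by (simp add: T2_def)
qed

lemma norm_pow_lt1: fixes x :: complex shows "norm x < 1 \<Longrightarrow> norm (x^Suc k) < 1"
  by (simp add: norm_power power_less_one_iff del: power_Suc)

lemma J3: fixes x :: complex assumes x1: "norm x < 1"
  shows "th3 x * Ep x ^ 2 * Ep (x^4) ^ 2 = Ep (x^2) ^ 5"
proof (cases "x = 0")
  case True thus ?thesis by simp
next
  case False
  have x2: "norm (x^2) < 1" using norm_pow_lt1[OF x1, of 1] by (simp add: numeral_2_eq_2)
  have x4: "norm (x^4) < 1" using norm_pow_lt1[OF x1, of 3] by (simp add: numeral_Bit0 numeral_3_eq_3)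
  define A where "A N = (\<Prod>i<N. 1 + x^(2*i+1))" for N
  define AA where "AA N = A N * A N" for N
  have J: "AA \<longlonglongrightarrow> inverse (Ep (x^2)) * th3 x"
  proof -
    have "(\<lambda>N. \<Prod>i<N. (1 + x^(2*i+1)*1) * (1 + x^(2*i+1)/1)) \<longlonglongrightarrow>
     inverse (Ep (x^2)) * ((\<Sum>j. x^(j^2) * 1^j) + (\<Sum>j. x^((Suc j)^2) / 1^(Suc j)))"
      by (rule jtp_lim[OF x1 False]) simp
    hence "(\<lambda>N. A N * A N) \<longlonglongrightarrow> inverse (Ep (x^2)) * th3 x"
      by (simp add: A_def prod.distrib th3_def)
    moreover have "AA = (\<lambda>N. A N * A N)" by (simp add: AA_def fun_eq_iff)
    ultimately show ?thesis by simp
  qed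
  have fin: "A N * A N * poch x (2*N)^2 * poch (x^4) N^2 = poch (x^2) (2*N)^2 * poch (x^2) N^2" for N
  proof -
    have p1: "poch x (2*N) = poch (x^2) N * oddp x N" by (rule poch_double)
    have p2: "poch (x^2) (2*N) = poch (x^4) N * oddp (x^2) N"
      using poch_double[of "x^2" N] by (simp add: power_mult[symmetric])
    have p3: "A N * oddp x N = oddp (x^2) N" unfolding A_def by (rule oddp_plus)
    show ?thesis unfolding p1 p2 p3[symmetric] by (simp add: power2_eq_square mult_ac)
  qed
  have L1: "(\<lambda>N. AA N * poch x (2*N)^2 * poch (x^4) N^2) \<longlonglongrightarrow> inverse (Ep (x^2)) * th3 x * Ep x ^ 2 * Ep (x^4) ^ 2"
  proof (intro tendsto_mult tendsto_power J Ep_lim[OF x4])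
    show "(\<lambda>N. poch x (2*N)) \<longlonglongrightarrow> Ep x"
      by (rule tendsto_nat_comp[OF Ep_lim[OF x1], of _ 0]) simp
  qed
  have L2: "(\<lambda>N. poch (x^2) (2*N)^2 * poch (x^2) N^2) \<longlonglongrightarrow> Ep (x^2) ^ 2 * Ep (x^2) ^ 2"
  proof (intro tendsto_mult tendsto_power Ep_lim[OF x2])
    show "(\<lambda>N. poch (x^2) (2*N)) \<longlonglongrightarrow> Ep (x^2)"
      by (rule tendsto_nat_comp[OF Ep_lim[OF x2], of _ 0]) simp
  qed
  have "inverse (Ep (x^2)) * th3 x * Ep x ^ 2 * Ep (x^4) ^ 2 = Ep (x^2) ^ 2 * Ep (x^2) ^ 2"
    using L1 L2 unfolding AA_def fin by (rule LIMSEQ_unique)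
  hence "Ep (x^2) * (inverse (Ep (x^2)) * th3 x * Ep x ^ 2 * Ep (x^4) ^ 2) = Ep (x^2) * (Ep (x^2) ^ 2 * Ep (x^2) ^ 2)"
    by simp
  thus ?thesis using Ep_nz[OF x2] by (simp add: field_simps eval_nat_numeral)
qed

lemma J2: fixes x :: complex assumes x1: "norm x < 1"
  shows "T2 x * Ep (x^2) = 2 * Ep (x^4) ^ 2"
proof (cases "x = 0")
  case True thus ?thesis by simp
next
  case False
  have x2: "norm (x^2) < 1" using norm_pow_lt1[OF x1, of 1] by (simp add: numeral_2_eq_2)
  have x4: "norm (x^4) < 1" using norm_pow_lt1[OF x1, of 3] by (simp add: numeral_Bit0 numeral_3_eq_3)
  define B where "B N = (\<Prod>i<N. 1 + x^(2*i+2))" for N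
  define C where "C N = (\<Prod>i<N. 1 + x^(2*i))" for N
  define BC where "BC N = B N * C N" for N
  have J: "BC \<longlonglongrightarrow> inverse (Ep (x^2)) * T2 x"
  proof -
    have "(\<lambda>N. \<Prod>i<N. (1 + x^(2*i+1)*x) * (1 + x^(2*i+1)/x)) \<longlonglongrightarrow>
     inverse (Ep (x^2)) * ((\<Sum>j. x^(j^2) * x^j) + (\<Sum>j. x^((Suc j)^2) / x^(Suc j)))"
      by (rule jtp_lim[OF x1 False False])
    moreover have "(\<Prod>i<N. (1 + x^(2*i+1)*x) * (1 + x^(2*i+1)/x)) = BC N" for N
    proof -
      have "(\<Prod>i<N. (1 + x^(2*i+1)*x) * (1 + x^(2*i+1)/x)) = (\<Prod>i<N. (1 + x^(2*i+2)) * (1 + x^(2*i)))"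
      proof (rule prod.cong[OF refl])
        fix i
        have "x^(2*i+1)*x = x^(2*i+2)" by simp
        moreover have "x^(2*i+1)/x = x^(2*i)" using False by simp
        ultimately show "(1 + x^(2*i+1)*x) * (1 + x^(2*i+1)/x) = (1 + x^(2*i+2)) * (1 + x^(2*i))" by simp
      qed
      thus ?thesis unfolding BC_def B_def C_def prod.distrib .
    qed
    moreover have "(\<Sum>j. x^(j^2) * x^j) + (\<Sum>j. x^((Suc j)^2) / x^(Suc j)) = T2 x"
    proof -
      have a: "x^(j^2) * x^j = x^(j^2+j)" for j by (simp add: power_add)
      have b: "x^((Suc j)^2) / x^(Suc j) = x^(j^2+j)" for j
      proof -
        have "(Suc j)^2 = (j^2+j) + Suc j" by (simp add: power2_eq_square)
        hence "x^((Suc j)^2) = x^(j^2+j) * x^(Suc j)" by (simp only: power_add)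
        thus ?thesis using False by simp
      qed
      show ?thesis unfolding a b T2_def by simp
    qed
    ultimately show ?thesis by simp
  qed
  have fin: "B N * C N * (1 + x^(2*N)) * poch (x^2) N^2 = 2 * poch (x^4) N^2" for N
  proof -
    have p1: "C N * (1 + x^(2*N)) = 2 * B N" unfolding B_def C_def by (rule evenp_shift)
    have p2: "B N * poch (x^2) N = poch (x^4) N" unfolding B_def by (rule even_plus)
    have "B N * C N * (1 + x^(2*N)) * poch (x^2) N^2 = 2 * (B N * poch (x^2) N)^2"
      using p1 by (simp add: power2_eq_square mult_ac)
    thus ?thesis unfolding p2 .
  qed
  have L1: "(\<lambda>N. BC N * (1 + x^(2*N)) * poch (x^2) N^2) \<longlonglongrightarrow> inverse (Ep (x^2)) * T2 x * (1 + 0) * Ep (x^2) ^ 2"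
  proof (intro tendsto_mult tendsto_power J Ep_lim[OF x2] tendsto_add tendsto_const)
    show "(\<lambda>N. x^(2*N)) \<longlonglongrightarrow> 0"
      using LIMSEQ_power_zero[OF x2] by (simp add: power_mult)
  qed
  have L2: "(\<lambda>N. 2 * poch (x^4) N^2) \<longlonglongrightarrow> 2 * Ep (x^4) ^ 2"
    by (intro tendsto_mult tendsto_power Ep_lim[OF x4] tendsto_const)
  have "inverse (Ep (x^2)) * T2 x * (1 + 0) * Ep (x^2) ^ 2 = 2 * Ep (x^4) ^ 2"
    using L1 L2 unfolding BC_def fin by (rule LIMSEQ_unique)
  thus ?thesis using Ep_nz[OF x2] by (simp add: field_simps power2_eq_square)
qed

lemma has_sum_int_split:
  fixes f :: "int \<Rightarrow> complex"
  assumes s1: "summable (\<lambda>j. norm (f (int j)))" and s2: "summable (\<lambda>j. norm (f (- int (Suc j))))"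
  shows "(f has_sum ((\<Sum>j. f (int j)) + (\<Sum>j. f (- int (Suc j))))) UNIV"
proof -
  have h1: "((f \<circ> int) has_sum (\<Sum>j. f (int j))) UNIV"
    using norm_summable_imp_has_sum[OF _ summable_sums[OF summable_norm_cancel]] s1 by (simp add: o_def)
  have h2: "((f \<circ> (\<lambda>j. - int (Suc j))) has_sum (\<Sum>j. f (- int (Suc j)))) UNIV"
    using norm_summable_imp_has_sum[OF _ summable_sums[OF summable_norm_cancel]] s2 by (simp add: o_def)
  have i1: "inj_on int UNIV" by (simp add: inj_on_def)
  have i2: "inj_on (\<lambda>j. - int (Suc j)) UNIV" by (simp add: inj_on_def)
  have a: "(f has_sum (\<Sum>j. f (int j))) (range int)" using h1 by (subst has_sum_reindex[OF i1])
  have b: "(f has_sum (\<Sum>j. f (- int (Suc j)))) (range (\<lambda>j. - int (Suc j)))" using h2 by (subst has_sum_reindex[OF i2])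
  have d: "range int \<inter> range (\<lambda>j. - int (Suc j)) = {}" by auto
  have u: "range int \<union> range (\<lambda>j. - int (Suc j)) = UNIV"
  proof (intro set_eqI iffI)
    fix n :: int
    show "n \<in> range int \<union> range (\<lambda>j. - int (Suc j))"
    proof (cases "n \<ge> 0")
      case True thus ?thesis by (auto intro: image_eqI[of _ _ "nat n"])
    next
      case False
      hence "n = - int (Suc (nat (- n - 1)))" by simp
      thus ?thesis by blast
    qed
  qed simp
  show ?thesis using has_sum_Un_disjoint[OF a b d] unfolding u .
qed

definition fZ3 :: "complex \<Rightarrow> int \<Rightarrow> complex" where "fZ3 x n = x ^ nat (n^2)"
definition fZ2 :: "complex \<Rightarrow> int \<Rightarrow> complex" where "fZ2 x n = x ^ nat (n^2 + n)"

lemma summable_pow_sq: fixes x :: complex assumes "norm x < 1"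
  shows "summable (\<lambda>j. norm (x^(j^2)))" "summable (\<lambda>j. norm (x^((Suc j)^2)))" "summable (\<lambda>j. norm (x^(j^2+j)))"
proof -
  have a: "summable (\<lambda>j. norm x ^ (j^2) * 1^j)" by (rule summable_theta) (use assms in auto)
  thus "summable (\<lambda>j. norm (x^(j^2)))" by (simp add: norm_power)
  thus "summable (\<lambda>j. norm (x^((Suc j)^2)))" by (subst summable_Suc_iff)
  have "summable (\<lambda>j. norm x ^ (j^2) * norm x^j)" by (rule summable_theta) (use assms in auto)
  thus "summable (\<lambda>j. norm (x^(j^2+j)))" by (simp add: norm_power power_add norm_mult)
qed

lemma fZ3_has_sum: fixes x :: complex assumes "norm x < 1" shows "(fZ3 x has_sum th3 x) UNIV"
proof -
  have e1: "fZ3 x (int j) = x^(j^2)" for j by (simp add: fZ3_def nat_power_eq)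
  have e2: "fZ3 x (- int (Suc j)) = x^((Suc j)^2)" for j
  proof -
    have "(- int (Suc j))^2 = int ((Suc j)^2)" by (simp only: power2_minus of_nat_power)
    thus ?thesis unfolding fZ3_def by (simp only: nat_int)
  qed
  show ?thesis using has_sum_int_split[of "fZ3 x"] summable_pow_sq[OF assms] unfolding e1 e2 th3_def by simp
qed

lemma fZ2_has_sum: fixes x :: complex assumes "norm x < 1" shows "(fZ2 x has_sum T2 x) UNIV"
proof -
  have e1: "fZ2 x (int j) = x^(j^2+j)" for j
  proof -
    have "nat ((int j)^2 + int j) = j^2 + j" by (simp add: nat_add_distrib nat_power_eq)
    thus ?thesis by (simp add: fZ2_def)
  qed
  have e2: "fZ2 x (- int (Suc j)) = x^(j^2+j)" for j
  proof -
    have e: "(- int (Suc j))^2 + (- int (Suc j)) = int (j^2 + j)" by (simp add: power2_eq_square algebra_simps)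
    show ?thesis unfolding fZ2_def e nat_int ..
  qed
  show ?thesis using has_sum_int_split[of "fZ2 x"] summable_pow_sq[OF assms] unfolding e1 e2 T2_def by simp
qed

lemma has_sum_prod2:
  fixes f g :: "'a \<Rightarrow> complex"
  assumes F: "(f has_sum a) A" and G: "(g has_sum b) B"
  shows "((\<lambda>(m,n). f m * g n) has_sum (a*b)) (A \<times> B)"
proof -
  have fs: "(\<lambda>x. norm (f x)) summable_on A" using F summable_on_iff_abs_summable_on_complex by (auto simp: summable_on_def)
  have gs: "(\<lambda>x. norm (g x)) summable_on B" using G summable_on_iff_abs_summable_on_complex by (auto simp: summable_on_def)
  have "(\<lambda>p. norm ((\<lambda>(m,n). f m * g n) p)) summable_on (Sigma A (\<lambda>_. B))"
  proof (rule Infinite_Sum.abs_summable_on_Sigma_iff[THEN iffD2], intro conjI ballI)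
    fix m assume "m \<in> A"
    show "(\<lambda>n. norm (case (m, n) of (m, n) \<Rightarrow> f m * g n)) summable_on B"
      using summable_on_cmult_right[OF gs, of "norm (f m)"] by (simp add: norm_mult)
  next
    have "(\<lambda>m. norm (norm (f m) * (\<Sum>\<^sub>\<infinity>n\<in>B. norm (g n)))) summable_on A"
      using summable_on_cmult_left[OF fs, of "\<Sum>\<^sub>\<infinity>n\<in>B. norm (g n)"]
      by (simp add: norm_mult infsum_nonneg)
    moreover have "(\<Sum>\<^sub>\<infinity>n\<in>B. norm (case (m, n) of (m, n) \<Rightarrow> f m * g n)) = norm (f m) * (\<Sum>\<^sub>\<infinity>n\<in>B. norm (g n))" for m
      by (simp add: norm_mult infsum_cmult_right')
    ultimately show "(\<lambda>m. norm (\<Sum>\<^sub>\<infinity>n\<in>B. norm (case (m, n) of (m, n) \<Rightarrow> f m * g n))) summable_on A"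
      by simp
  qed
  hence summ: "(\<lambda>(m,n). f m * g n) summable_on (Sigma A (\<lambda>_. B))"
    using summable_on_iff_abs_summable_on_complex by blast
  have "((\<lambda>(m,n). f m * g n) has_sum (a*b)) (Sigma A (\<lambda>_. B))"
  proof (rule has_sum_SigmaI[OF _ _ summ])
    fix m assume "m \<in> A"
    show "((\<lambda>n. case (m, n) of (m, n) \<Rightarrow> f m * g n) has_sum (f m * b)) B"
      using has_sum_cmult_right[OF G] by simp
  next
    show "((\<lambda>m. f m * b) has_sum (a*b)) A" by (rule has_sum_cmult_left[OF F])
  qed
  thus ?thesis by simp
qed

lemma pow_combine:
  fixes x :: complex
  assumes "0 \<le> e1" "0 \<le> e2" "0 \<le> f1" "0 \<le> f2" "0 \<le> c" "e1 + e2 = c + 2*f1 + 2*f2"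
  shows "x^(nat e1) * x^(nat e2) = x^(nat c) * ((x^2)^(nat f1) * (x^2)^(nat f2))"
proof -
  have "nat e1 + nat e2 = nat c + 2 * nat f1 + 2 * nat f2" using assms by arith
  hence "x^(nat e1 + nat e2) = x^(nat c + 2 * nat f1 + 2 * nat f2)" by simp
  thus ?thesis by (simp add: power_add power_mult)
qed

lemma sq_plus_nonneg: "0 \<le> (a::int)^2 + a"
proof (cases "a \<ge> 0")
  case True thus ?thesis by simp
next
  case False
  hence "a^2 + a = (-a) * (-a - 1)" by (simp add: power2_eq_square algebra_simps)
  moreover have "0 \<le> -a" "0 \<le> -a - 1" using False by auto
  hence "(-a) * (-a - 1) \<ge> 0" by (rule mult_nonneg_nonneg)
  ultimately show ?thesis by simp
qed

lemma reindex_pairs: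
  fixes g h :: "int \<times> int \<Rightarrow> complex"
  assumes "(g has_sum s) UNIV" "\<And>a. i (j a) = a" "\<And>a. j a \<in> T" "\<And>b. b \<in> T \<Longrightarrow> j (i b) = b"
    "\<And>a. h (j a) = g a"
  shows "(h has_sum s) T"
  using assms(1) has_sum_reindex_bij_witness[of UNIV i j T h g s s] assms(2-5) by auto

lemma I1: fixes x :: complex assumes x1: "norm x < 1"
  shows "th3 x * th3 x = th3 (x^2) * th3 (x^2) + x * (T2 (x^2) * T2 (x^2))"
proof -
  have x2: "norm (x^2) < 1" using norm_pow_lt1[OF x1, of 1] by (simp add: numeral_2_eq_2)
  define F where "F = (\<lambda>(m,n). fZ3 x m * fZ3 x n)"
  have P1: "(F has_sum (th3 x * th3 x)) UNIV"
    using has_sum_prod2[OF fZ3_has_sum[OF x1] fZ3_has_sum[OF x1]] by (simp add: F_def)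
  define E where "E = {p :: int \<times> int. even (fst p + snd p)}"
  define Od where "Od = {p :: int \<times> int. odd (fst p + snd p)}"
  have PE: "(F has_sum (th3 (x^2) * th3 (x^2))) E"
  proof (rule reindex_pairs[where i = "\<lambda>(m,n). ((m+n) div 2, (m-n) div 2)" and j = "\<lambda>(a,b). (a+b, a-b)"])
    show "((\<lambda>(a,b). fZ3 (x^2) a * fZ3 (x^2) b) has_sum (th3 (x^2) * th3 (x^2))) UNIV"
      using has_sum_prod2[OF fZ3_has_sum[OF x2] fZ3_has_sum[OF x2]] by simp
    fix a :: "int \<times> int"
    obtain u v where a: "a = (u,v)" by (cases a)
    show "(\<lambda>(m,n). ((m+n) div 2, (m-n) div 2)) ((\<lambda>(a,b). (a+b, a-b)) a) = a" using a by simp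
    show "(\<lambda>(a,b). (a+b, a-b)) a \<in> E" using a by (simp add: E_def)
    show "F ((\<lambda>(a,b). (a+b, a-b)) a) = (\<lambda>(a,b). fZ3 (x^2) a * fZ3 (x^2) b) a"
    proof -
      have "x^(nat ((u+v)^2)) * x^(nat ((u-v)^2)) = x^(nat 0) * ((x^2)^(nat (u^2)) * (x^2)^(nat (v^2)))"
        by (rule pow_combine[OF zero_le_power2 zero_le_power2 zero_le_power2 zero_le_power2 order_refl])
           (simp add: power2_eq_square algebra_simps)
      thus ?thesis using a unfolding F_def fZ3_def by simp
    qed
  next
    fix b :: "int \<times> int" assume "b \<in> E"
    then obtain m n where b: "b = (m,n)" "even (m+n)" by (cases b) (auto simp: E_def)
    thus "(\<lambda>(a,b). (a+b, a-b)) ((\<lambda>(m,n). ((m+n) div 2, (m-n) div 2)) b) = b"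
      by auto presburger+
  qed
  have PO: "(F has_sum (x * (T2 (x^2) * T2 (x^2)))) Od"
  proof (rule reindex_pairs[where i = "\<lambda>(m,n). ((m+n-1) div 2, (m-n-1) div 2)" and j = "\<lambda>(a,b). (a+b+1, a-b)"])
    show "((\<lambda>(a,b). x * (fZ2 (x^2) a * fZ2 (x^2) b)) has_sum (x * (T2 (x^2) * T2 (x^2)))) UNIV"
      using has_sum_cmult_right[OF has_sum_prod2[OF fZ2_has_sum[OF x2] fZ2_has_sum[OF x2]], of x]
      by (simp add: case_prod_unfold)
    fix a :: "int \<times> int"
    obtain u v where a: "a = (u,v)" by (cases a)
    show "(\<lambda>(m,n). ((m+n-1) div 2, (m-n-1) div 2)) ((\<lambda>(a,b). (a+b+1, a-b)) a) = a" using a by simp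
    show "(\<lambda>(a,b). (a+b+1, a-b)) a \<in> Od" using a by (simp add: Od_def)
    have "x^(nat ((u+v+1)^2)) * x^(nat ((u-v)^2)) = x^(nat 1) * ((x^2)^(nat (u^2+u)) * (x^2)^(nat (v^2+v)))"
      by (rule pow_combine[OF zero_le_power2 zero_le_power2 sq_plus_nonneg sq_plus_nonneg])
         (simp_all add: power2_eq_square algebra_simps)
    thus "F ((\<lambda>(a,b). (a+b+1, a-b)) a) = (\<lambda>(a,b). x * (fZ2 (x^2) a * fZ2 (x^2) b)) a"
      using a unfolding F_def fZ3_def fZ2_def by simp
  next
    fix b :: "int \<times> int" assume "b \<in> Od"
    then obtain m n where b: "b = (m,n)" "odd (m+n)" by (cases b) (auto simp: Od_def)
    thus "(\<lambda>(a,b). (a+b+1, a-b)) ((\<lambda>(m,n). ((m+n-1) div 2, (m-n-1) div 2)) b) = b"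
      by auto presburger+
  qed
  have "E \<inter> Od = {}" "E \<union> Od = UNIV" by (auto simp: E_def Od_def)
  hence "(F has_sum (th3 (x^2) * th3 (x^2) + x * (T2 (x^2) * T2 (x^2)))) UNIV"
    using has_sum_Un_disjoint[OF PE PO] by simp
  thus ?thesis using P1 has_sum_unique by blast
qed

lemma I2: fixes x :: complex assumes x1: "norm x < 1"
  shows "T2 x * T2 x = 2 * (th3 (x^2) * T2 (x^2))"
proof -
  have x2: "norm (x^2) < 1" using norm_pow_lt1[OF x1, of 1] by (simp add: numeral_2_eq_2)
  define F where "F = (\<lambda>(m,n). fZ2 x m * fZ2 x n)"
  have P1: "(F has_sum (T2 x * T2 x)) UNIV"
    using has_sum_prod2[OF fZ2_has_sum[OF x1] fZ2_has_sum[OF x1]] by (simp add: F_def)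
  define E where "E = {p :: int \<times> int. even (fst p + snd p)}"
  define Od where "Od = {p :: int \<times> int. odd (fst p + snd p)}"
  have PE: "(F has_sum (T2 (x^2) * th3 (x^2))) E"
  proof (rule reindex_pairs[where i = "\<lambda>(m,n). ((m+n) div 2, (m-n) div 2)" and j = "\<lambda>(a,b). (a+b, a-b)"])
    show "((\<lambda>(a,b). fZ2 (x^2) a * fZ3 (x^2) b) has_sum (T2 (x^2) * th3 (x^2))) UNIV"
      using has_sum_prod2[OF fZ2_has_sum[OF x2] fZ3_has_sum[OF x2]] by simp
    fix a :: "int \<times> int"
    obtain u v where a: "a = (u,v)" by (cases a)
    show "(\<lambda>(m,n). ((m+n) div 2, (m-n) div 2)) ((\<lambda>(a,b). (a+b, a-b)) a) = a" using a by simp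
    show "(\<lambda>(a,b). (a+b, a-b)) a \<in> E" using a by (simp add: E_def)
    show "F ((\<lambda>(a,b). (a+b, a-b)) a) = (\<lambda>(a,b). fZ2 (x^2) a * fZ3 (x^2) b) a"
    proof -
      have "x^(nat ((u+v)^2 + (u+v))) * x^(nat ((u-v)^2 + (u-v))) = x^(nat 0) * ((x^2)^(nat (u^2+u)) * (x^2)^(nat (v^2)))"
        by (rule pow_combine[OF sq_plus_nonneg sq_plus_nonneg sq_plus_nonneg zero_le_power2 order_refl])
           (simp add: power2_eq_square algebra_simps)
      thus ?thesis using a unfolding F_def fZ3_def fZ2_def by simp
    qed
  next
    fix b :: "int \<times> int" assume "b \<in> E"
    then obtain m n where b: "b = (m,n)" "even (m+n)" by (cases b) (auto simp: E_def)
    thus "(\<lambda>(a,b). (a+b, a-b)) ((\<lambda>(m,n). ((m+n) div 2, (m-n) div 2)) b) = b"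
      by auto presburger+
  qed
  have PO: "(F has_sum (th3 (x^2) * T2 (x^2))) Od"
  proof (rule reindex_pairs[where i = "\<lambda>(m,n). ((m+n+1) div 2, (m-n-1) div 2)" and j = "\<lambda>(a,b). (a+b, a-b-1)"])
    show "((\<lambda>(a,b). fZ3 (x^2) a * fZ2 (x^2) b) has_sum (th3 (x^2) * T2 (x^2))) UNIV"
      using has_sum_prod2[OF fZ3_has_sum[OF x2] fZ2_has_sum[OF x2]] by simp
    fix a :: "int \<times> int"
    obtain u v where a: "a = (u,v)" by (cases a)
    show "(\<lambda>(m,n). ((m+n+1) div 2, (m-n-1) div 2)) ((\<lambda>(a,b). (a+b, a-b-1)) a) = a" using a by simp
    show "(\<lambda>(a,b). (a+b, a-b-1)) a \<in> Od" using a by (simp add: Od_def)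
    have "x^(nat ((u+v)^2 + (u+v))) * x^(nat ((u-v-1)^2 + (u-v-1))) = x^(nat 0) * ((x^2)^(nat (u^2)) * (x^2)^(nat (v^2+v)))"
      by (rule pow_combine[OF sq_plus_nonneg sq_plus_nonneg zero_le_power2 sq_plus_nonneg order_refl])
         (simp add: power2_eq_square algebra_simps)
    thus "F ((\<lambda>(a,b). (a+b, a-b-1)) a) = (\<lambda>(a,b). fZ3 (x^2) a * fZ2 (x^2) b) a"
      using a unfolding F_def fZ3_def fZ2_def by simp
  next
    fix b :: "int \<times> int" assume "b \<in> Od"
    then obtain m n where b: "b = (m,n)" "odd (m+n)" by (cases b) (auto simp: Od_def)
    thus "(\<lambda>(a,b). (a+b, a-b-1)) ((\<lambda>(m,n). ((m+n+1) div 2, (m-n-1) div 2)) b) = b"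
      by auto presburger+
  qed
  have "E \<inter> Od = {}" "E \<union> Od = UNIV" by (auto simp: E_def Od_def)
  hence "(F has_sum (T2 (x^2) * th3 (x^2) + th3 (x^2) * T2 (x^2))) UNIV"
    using has_sum_Un_disjoint[OF PE PO] by simp
  hence "T2 x * T2 x = T2 (x^2) * th3 (x^2) + th3 (x^2) * T2 (x^2)" using P1 has_sum_unique by blast
  thus ?thesis by (simp add: algebra_simps)
qed


lemma tail_bound:
  fixes y :: complex and e :: "nat \<Rightarrow> nat"
  assumes y: "norm y < 1" and e: "\<And>j. e j \<ge> Suc j"
  shows "summable (\<lambda>j. norm (y^(e j)))" "norm (\<Sum>j. y^(e j)) \<le> norm y / (1 - norm y)"
proof -
  have g: "summable (\<lambda>j. norm y * norm y ^ j)" using y by (intro summable_mult summable_geometric) simp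
  have le: "norm (y^(e j)) \<le> norm y * norm y ^ j" for j
  proof -
    have "norm (y^(e j)) = norm y ^ (e j)" by (simp add: norm_power)
    also have "\<dots> \<le> norm y ^ (Suc j)" by (rule power_decreasing[OF e]) (use y in auto)
    finally show ?thesis by simp
  qed
  show s: "summable (\<lambda>j. norm (y^(e j)))"
    by (rule summable_comparison_test[OF _ g]) (use le in auto)
  have "norm (\<Sum>j. y^(e j)) \<le> (\<Sum>j. norm (y^(e j)))" by (rule summable_norm[OF s])
  also have "\<dots> \<le> (\<Sum>j. norm y * norm y ^ j)" by (rule suminf_le[OF le s g])
  also have "\<dots> = norm y / (1 - norm y)"
    using y by (simp add: suminf_mult suminf_geometric[of "norm y"] summable_geometric divide_simps)
  finally show "norm (\<Sum>j. y^(e j)) \<le> norm y / (1 - norm y)" .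
qed

lemma th3_alt: fixes y :: complex assumes y: "norm y < 1"
  shows "th3 y = 1 + 2 * (\<Sum>j. y^((Suc j)^2))"
proof -
  have s: "summable (\<lambda>j. y^(j^2))" using summable_pow_sq(1)[OF y] by (rule summable_norm_cancel)
  have "(\<Sum>j. y^((Suc j)^2)) = (\<Sum>j. y^(j^2)) - 1" using suminf_split_head[OF s] by simp
  thus ?thesis by (simp add: th3_def)
qed

lemma T2_alt: fixes y :: complex assumes y: "norm y < 1"
  shows "T2 y = 2 + 2 * (\<Sum>j. y^((Suc j)^2 + Suc j))"
proof -
  have s: "summable (\<lambda>j. y^(j^2+j))" using summable_pow_sq(3)[OF y] by (rule summable_norm_cancel)
  have "(\<Sum>j. y^((Suc j)^2 + Suc j)) = (\<Sum>j. y^(j^2+j)) - 1" using suminf_split_head[OF s] by simp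
  hence "(\<Sum>j. y^(j^2+j)) = 1 + (\<Sum>j. y^((Suc j)^2 + Suc j))" by (simp only: algebra_simps)
  thus ?thesis unfolding T2_def by (simp only: distrib_left mult_1_right)
qed

lemma th3_bound: fixes y :: complex assumes y: "norm y < 1"
  shows "norm (th3 y - 1) \<le> 2 * (norm y / (1 - norm y))"
proof -
  have "norm (\<Sum>j. y^((Suc j)^2)) \<le> norm y / (1 - norm y)"
    by (rule tail_bound(2)[OF y]) (simp add: power2_eq_square)
  thus ?thesis using th3_alt[OF y] by (simp add: norm_mult)
qed

lemma T2_bound: fixes y :: complex assumes y: "norm y < 1"
  shows "norm (T2 y - 2) \<le> 2 * (norm y / (1 - norm y))"
proof -
  have "norm (\<Sum>j. y^((Suc j)^2 + Suc j)) \<le> norm y / (1 - norm y)"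
    by (rule tail_bound(2)[OF y]) (simp add: power2_eq_square)
  thus ?thesis using T2_alt[OF y] by (simp add: norm_mult)
qed

lemma lim_bound_helper:
  fixes f :: "complex \<Rightarrow> complex"
  assumes "\<And>y. norm y < 1 \<Longrightarrow> norm (f y - c) \<le> 2 * (norm y / (1 - norm y))" "f 0 = c"
  shows "isCont f 0"
proof -
  have "((\<lambda>y. f y - c) \<longlongrightarrow> 0) (at 0)"
  proof (rule Lim_null_comparison)
    have "eventually (\<lambda>y::complex. norm y < 1) (at 0)"
      using eventually_at[of "\<lambda>y::complex. norm y < 1" 0 UNIV] by (auto intro!: exI[of _ 1])
    thus "eventually (\<lambda>y. norm (f y - c) \<le> 2 * (norm y / (1 - norm y))) (at 0)"
      by eventually_elim (rule assms(1))
    have "((\<lambda>y::complex. 2 * (norm y / (1 - norm y))) \<longlongrightarrow> 2 * (norm (0::complex) / (1 - norm (0::complex)))) (at 0)"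
      by (intro tendsto_intros) auto
    thus "((\<lambda>y::complex. 2 * (norm y / (1 - norm y))) \<longlongrightarrow> 0) (at 0)" by simp
  qed
  hence "(f \<longlongrightarrow> c) (at 0)" by (simp add: LIM_zero_iff)
  thus ?thesis using assms(2) by (simp add: isCont_def)
qed

lemma isCont_th3: "isCont th3 0"
  by (rule lim_bound_helper[OF th3_bound]) simp_all

lemma isCont_T2: "isCont T2 0"
  by (rule lim_bound_helper[OF T2_bound]) simp_all

definition Lf :: "complex \<Rightarrow> complex" where
  "Lf y = y * T2 y ^ 4 / (16 * th3 y ^ 4)"

definition Rf :: "complex \<Rightarrow> complex" where
  "Rf y = Gfun (Lf y) / th3 y ^ 2"

definition tp :: "complex \<Rightarrow> complex" where
  "tp y = y * T2 (y^2) ^ 2 / (8 * th3 y ^ 2)"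

lemma Gfun_0 [simp]: "Gfun 0 = 1" by (simp add: Gfun_def eval_fps_at_0)

lemma isCont_Gfun: "isCont Gfun 0"
  unfolding Gfun_def[abs_def] using Gf_radius by (intro continuous_eval_fps) (simp add: zero_ereal_def)

lemma isCont_sq_comp: assumes "isCont f 0" shows "isCont (\<lambda>y::complex. f (y^2)) 0"
proof -
  have "isCont (\<lambda>y::complex. y^2) 0" by (intro continuous_intros)
  moreover have "isCont f ((\<lambda>y::complex. y^2) 0)" using assms by simp
  ultimately show ?thesis by (rule isCont_o2)
qed

lemma isCont_Lf: "isCont Lf 0"
  unfolding Lf_def[abs_def] by (intro continuous_intros isCont_T2 isCont_th3) simp

lemma Lf_0 [simp]: "Lf 0 = 0" by (simp add: Lf_def)

lemma isCont_Rf: "isCont Rf 0"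
  unfolding Rf_def[abs_def]
  by (intro continuous_intros isCont_th3 isCont_o2[OF isCont_Lf] ) (simp_all add: isCont_Gfun)

lemma Rf_0 [simp]: "Rf 0 = 1" by (simp add: Rf_def)

lemma isCont_tp: "isCont tp 0"
  unfolding tp_def[abs_def] by (intro continuous_intros isCont_th3 isCont_sq_comp isCont_T2) simp

lemma tp_0 [simp]: "tp 0 = 0" by (simp add: tp_def)

lemma cont_eventually:
  fixes g :: "complex \<Rightarrow> complex"
  assumes "isCont g 0" "open S" "g 0 \<in> S"
  shows "eventually (\<lambda>y. g y \<in> S) (nhds 0)"
proof -
  have "eventually (\<lambda>y. g y \<in> S) (at 0)"
    using assms unfolding isCont_def by (rule topological_tendstoD)
  thus ?thesis using assms(3) by (simp add: eventually_nhds_conv_at)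
qed

lemma step_algebra:
  fixes y A B Th Tau t :: complex
  assumes h1: "Th*Th = A*A + y*(B*B)" and h2: "Tau*Tau = 2*(A*B)" and A0: "A \<noteq> 0" and T0: "Th \<noteq> 0"
    and t: "t = y*B^2/(8*Th^2)"
  shows "1 - 8*t = A^2/Th^2" "2*t - 16*t^2 = y*Tau^4/(16*Th^4)"
        "4*t^2*(inverse(1-8*t))^2 = y^2*B^4/(16*A^4)"
proof -
  have "1 - 8*t = (Th^2 - y*B^2)/Th^2" unfolding t using T0 by (simp add: field_simps)
  also have "Th^2 - y*B^2 = A^2" using h1 by (simp add: power2_eq_square)
  finally show c: "1 - 8*t = A^2/Th^2" .
  have "2*t - 16*t^2 = 2*t*(1 - 8*t)" by (simp add: algebra_simps power2_eq_square)
  also have "\<dots> = 2*t*(A^2/Th^2)" by (simp only: c)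
  also have "\<dots> = y*B^2*A^2/(4*Th^4)" unfolding t using T0 by (simp add: field_simps power2_eq_square eval_nat_numeral)
  also have "\<dots> = y*Tau^4/(16*Th^4)"
  proof -
    have "Tau^4 = (Tau*Tau)^2" by (simp add: power2_eq_square algebra_simps eval_nat_numeral)
    also have "\<dots> = 4*A^2*B^2" unfolding h2 by (simp add: power2_eq_square algebra_simps)
    finally show ?thesis using T0 by (simp add: field_simps)
  qed
  finally show "2*t - 16*t^2 = y*Tau^4/(16*Th^4)" .
  show "4*t^2*(inverse(1-8*t))^2 = y^2*B^4/(16*A^4)"
  proof -
    have "4*t^2*(inverse(1-8*t))^2 = 4*t^2*(inverse(A^2/Th^2))^2" by (simp only: c)
    also have "\<dots> = y^2*B^4/(16*A^4)" unfolding t using T0 A0 by (simp add: field_simps power2_eq_square eval_nat_numeral)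
    finally show ?thesis .
  qed
qed

lemma R_step:
  "\<exists>r>0. r \<le> 1/2 \<and> (\<forall>y. norm y < r \<longrightarrow> Rf y = Rf (y^2) \<and>
      (\<lambda>n. complex_of_real (clf n) * tp y ^ n) sums eval_fps Pf (tp y) \<and> eval_fps Pf (tp y) = Gfun (Lf y))"
proof -
  obtain d where d: "d > 0" "\<And>x. norm x < d \<Longrightarrow>
     (\<lambda>n. complex_of_real (clf n) * x^n) sums eval_fps Pf x \<and>
     eval_fps Pf x = Gfun (2*x - 16*x^2) \<and>
     eval_fps Pf x * (1 - 8*x) = Gfun (4 * x^2 * (inverse (1 - 8*x))^2)"
    using clf_fun by blast
  have E1: "eventually (\<lambda>y. (\<lambda>y. y) y \<in> ball 0 (1/2)) (nhds (0::complex))"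
    by (rule cont_eventually) auto
  have E2: "eventually (\<lambda>y. (\<lambda>y. th3 (y^2)) y \<in> ball 1 (1/2)) (nhds 0)"
    by (rule cont_eventually[OF isCont_sq_comp[OF isCont_th3]]) auto
  have E3: "eventually (\<lambda>y. th3 y \<in> ball 1 (1/2)) (nhds 0)"
    by (rule cont_eventually[OF isCont_th3]) auto
  have E4: "eventually (\<lambda>y. tp y \<in> ball 0 d) (nhds 0)"
    by (rule cont_eventually[OF isCont_tp]) (use d in auto)
  have "eventually (\<lambda>y. y \<in> ball 0 (1/2) \<and> th3 (y^2) \<in> ball 1 (1/2) \<and> th3 y \<in> ball 1 (1/2) \<and> tp y \<in> ball 0 d) (nhds 0)"
    using E1 E2 E3 E4 by eventually_elim auto
  then obtain r0 where r0: "r0 > 0" "\<And>y. dist y 0 < r0 \<Longrightarrow> y \<in> ball 0 (1/2) \<and> th3 (y^2) \<in> ball 1 (1/2) \<and> th3 y \<in> ball 1 (1/2) \<and> tp y \<in> ball 0 d"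
    unfolding eventually_nhds_metric by blast
  show ?thesis
  proof (intro exI[of _ "min r0 (1/2)"] conjI allI impI)
    show "min r0 (1/2) > 0" using r0 by simp
    show "min r0 (1/2) \<le> 1/2" by simp
    fix y :: complex assume y: "norm y < min r0 (1/2)"
    have P: "y \<in> ball 0 (1/2) \<and> th3 (y^2) \<in> ball 1 (1/2) \<and> th3 y \<in> ball 1 (1/2) \<and> tp y \<in> ball 0 d"
      using r0(2)[of y] y by simp
    have y1: "norm y < 1" using y by simp
    have A0: "th3 (y^2) \<noteq> 0" using P by (auto simp: dist_norm)
    have T0: "th3 y \<noteq> 0" using P by (auto simp: dist_norm)
    have td: "norm (tp y) < d" using P by (simp add: dist_norm)
    note alg = step_algebra[OF I1[OF y1] I2[OF y1] A0 T0 tp_def]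
    note cf = d(2)[OF td]
    show "(\<lambda>n. complex_of_real (clf n) * tp y ^ n) sums eval_fps Pf (tp y)" using cf by blast
    have PL: "eval_fps Pf (tp y) = Gfun (Lf y)"
      using cf alg(2) unfolding Lf_def by simp
    thus "eval_fps Pf (tp y) = Gfun (Lf y)" .
    have c3: "eval_fps Pf (tp y) * (1 - 8 * tp y) = Gfun (4 * tp y^2 * (inverse (1 - 8*tp y))^2)"
      using cf by blast
    have "Gfun (4 * tp y^2 * (inverse (1 - 8*tp y))^2) = Gfun (Lf (y^2))"
      unfolding alg(3) Lf_def ..
    hence "eval_fps Pf (tp y) * (1 - 8 * tp y) = Gfun (Lf (y^2))" using c3 by simp
    hence PL2: "eval_fps Pf (tp y) * (th3 (y^2)^2 / th3 y^2) = Gfun (Lf (y^2))"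
      unfolding alg(1) .
    have "Rf y = eval_fps Pf (tp y) / th3 y ^ 2" unfolding Rf_def PL ..
    moreover have "Rf (y^2) = eval_fps Pf (tp y) / th3 y ^ 2"
      unfolding Rf_def PL2[symmetric] using A0 by (simp add: field_simps)
    ultimately show "Rf y = Rf (y^2)" by simp
  qed
qed

lemma R_one:
  "\<exists>r>0. r \<le> 1/2 \<and> (\<forall>y. norm y < r \<longrightarrow>
      (\<lambda>n. complex_of_real (clf n) * tp y ^ n) sums eval_fps Pf (tp y) \<and> eval_fps Pf (tp y) = th3 y ^ 2)"
proof -
  obtain r where r: "r > 0" "r \<le> 1/2" "\<And>y. norm y < r \<Longrightarrow> Rf y = Rf (y^2) \<and>
      (\<lambda>n. complex_of_real (clf n) * tp y ^ n) sums eval_fps Pf (tp y) \<and> eval_fps Pf (tp y) = Gfun (Lf y)"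
    using R_step by blast
  show ?thesis
  proof (intro exI[of _ r] conjI allI impI)
    show "r > 0" "r \<le> 1/2" using r by auto
    fix y :: complex assume y: "norm y < r"
    have y1: "norm y < 1" using y r by simp
    have pw: "norm (y^(2^k)) < r" for k
    proof -
      have "norm (y^(2^k)) = norm y ^ (2^k)" by (simp add: norm_power)
      also have "\<dots> \<le> norm y ^ 1" by (rule power_decreasing) (use y1 in auto)
      finally show ?thesis using y by simp
    qed
    have eq: "Rf (y^(2^k)) = Rf y" for k
    proof (induction k)
      case 0 thus ?case by simp
    next
      case (Suc k)
      have "Rf (y^(2^k)) = Rf ((y^(2^k))^2)" using r(3)[OF pw[of k]] by blast
      also have "(y^(2^k))^2 = y^(2^Suc k)" by (simp add: power_mult[symmetric] mult.commute)
      finally show ?case using Suc by simp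
    qed
    have "(\<lambda>k. y^(2^k)) \<longlonglongrightarrow> 0"
    proof (rule Lim_null_comparison)
      show "eventually (\<lambda>k. norm (y^(2^k)) \<le> norm y ^ k) sequentially"
      proof (intro always_eventually allI)
        fix k :: nat
        have "k \<le> 2^k" using less_exp[of k] by simp
        hence "norm y ^ (2^k) \<le> norm y ^ k" by (intro power_decreasing) (use y1 in auto)
        thus "norm (y^(2^k)) \<le> norm y ^ k" by (simp add: norm_power)
      qed
      show "(\<lambda>k. norm y ^ k) \<longlonglongrightarrow> 0" by (rule LIMSEQ_power_zero) (use y1 in simp)
    qed
    hence "(\<lambda>k. Rf (y^(2^k))) \<longlonglongrightarrow> Rf 0" by (rule isCont_tendsto_compose[OF isCont_Rf])
    hence "(\<lambda>k. Rf y) \<longlonglongrightarrow> 1" unfolding eq by simp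
    hence R1: "Rf y = 1" by (simp add: LIMSEQ_const_iff)
    have T0: "th3 y \<noteq> 0"
    proof
      assume "th3 y = 0"
      hence "Rf y = 0" by (simp add: Rf_def)
      thus False using R1 by simp
    qed
    have S: "(\<lambda>n. complex_of_real (clf n) * tp y ^ n) sums eval_fps Pf (tp y)" and G: "eval_fps Pf (tp y) = Gfun (Lf y)"
      using r(3)[OF y] by blast+
    show "(\<lambda>n. complex_of_real (clf n) * tp y ^ n) sums eval_fps Pf (tp y)" by (rule S)
    show "eval_fps Pf (tp y) = th3 y ^ 2" using R1 T0 unfolding G Rf_def by (simp add: field_simps)
  qed
qed

lemma norm_nome: "norm (nome t) = exp (- 2 * pi * Im t)"
  by (simp add: nome_def norm_exp_eq_Re)

lemma eta_k: "dedekind_eta (of_nat k * t) = exp (2 * pi * \<i> * t / 24) ^ k * Ep (nome t ^ k)"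
proof -
  have a: "exp (2 * pi * \<i> * (of_nat k * t) / 24) = exp (2 * pi * \<i> * t / 24) ^ k"
  proof -
    have "2 * pi * \<i> * (of_nat k * t) / 24 = of_nat k * (2 * pi * \<i> * t / 24)" by simp
    thus ?thesis by (simp only: exp_of_nat_mult)
  qed
  have b: "nome (of_nat k * t) = nome t ^ k"
  proof -
    have "2 * pi * \<i> * (of_nat k * t) = of_nat k * (2 * pi * \<i> * t)" by simp
    thus ?thesis unfolding nome_def by (simp only: exp_of_nat_mult)
  qed
  show ?thesis unfolding dedekind_eta_def a b Ep_def ..
qed

lemma eta_num:
  "dedekind_eta t = exp (2 * pi * \<i> * t / 24) * Ep (nome t)"
  "dedekind_eta (2 * t) = exp (2 * pi * \<i> * t / 24) ^ 2 * Ep (nome t ^ 2)"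
  "dedekind_eta (4 * t) = exp (2 * pi * \<i> * t / 24) ^ 4 * Ep (nome t ^ 4)"
  "dedekind_eta (8 * t) = exp (2 * pi * \<i> * t / 24) ^ 8 * Ep (nome t ^ 8)"
  using eta_k[of 1 t] eta_k[of 2 t] eta_k[of 4 t] eta_k[of 8 t] by simp_all

lemma e24: "exp (2 * pi * \<i> * t / 24) ^ 24 = nome t"
proof -
  have "exp (2 * pi * \<i> * t / 24) ^ 24 = exp (of_nat 24 * (2 * pi * \<i> * t / 24))"
    by (simp only: exp_of_nat_mult)
  also have "of_nat 24 * (2 * pi * \<i> * t / 24) = 2 * pi * \<i> * t" by simp
  finally show ?thesis by (simp add: nome_def)
qed

lemma eta_identities:
  fixes t :: complex
  assumes q1: "norm (nome t) < 1"
  shows "clf_f t = th3 (nome t) ^ 2" "clf_t t = tp (nome t)"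
proof -
  define q where "q = nome t"
  define e where "e = exp (2 * pi * \<i> * t / 24)"
  have e0: "e \<noteq> 0" by (simp add: e_def)
  have q1': "norm q < 1" using q1 by (simp add: q_def)
  have qq: "norm (q^2) < 1" "norm (q^4) < 1" "norm (q^8) < 1"
    using norm_pow_lt1[OF q1', of 1] norm_pow_lt1[OF q1', of 3] norm_pow_lt1[OF q1', of 7]
    by (simp_all add: eval_nat_numeral)
  define E1 E2 E4 E8 where "E1 = Ep q" "E2 = Ep (q^2)" "E4 = Ep (q^4)" "E8 = Ep (q^8)"
  have nz: "E1 \<noteq> 0" "E2 \<noteq> 0" "E4 \<noteq> 0" "E8 \<noteq> 0"
    using Ep_nz[OF q1'] Ep_nz[OF qq(1)] Ep_nz[OF qq(2)] Ep_nz[OF qq(3)] by (simp_all add: E1_E2_E4_E8_def)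
  have j3: "th3 q * E1^2 * E4^2 = E2^5" using J3[OF q1'] by (simp add: E1_E2_E4_E8_def)
  have j2: "T2 (q^2) * E4 = 2 * E8^2"
    using J2[OF qq(1)] by (simp add: E1_E2_E4_E8_def power_mult[symmetric])
  have th: "th3 q = E2^5 / (E1^2 * E4^2)" using j3 nz by (simp add: field_simps)
  have t2: "T2 (q^2) = 2 * E8^2 / E4" using j2 nz by (simp add: field_simps)
  have eta: "dedekind_eta t = e * E1" "dedekind_eta (2*t) = e^2 * E2"
     "dedekind_eta (4*t) = e^4 * E4" "dedekind_eta (8*t) = e^8 * E8"
    using eta_num[of t] by (simp_all add: e_def q_def E1_E2_E4_E8_def)
  have e24': "e^24 = q" unfolding e_def q_def by (rule e24)
  show "clf_f t = th3 (nome t) ^ 2"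
    unfolding clf_f_def eta q_def[symmetric] th using nz e0 by (simp add: field_simps eval_nat_numeral)
  have "clf_t t = (1/2) * e^24 * (E1^4 * E4^2 * E8^4) / E2^10"
    unfolding clf_t_def eta using nz e0 by (simp add: field_simps eval_nat_numeral)
  also have "\<dots> = tp q"
    unfolding e24' tp_def th t2 using nz by (simp add: field_simps eval_nat_numeral)
  finally show "clf_t t = tp (nome t)" by (simp add: q_def)
qed

theorem theorem8:
  shows "\<exists>y0>0. \<forall>\<tau>::complex. Im \<tau> > y0 \<longrightarrow>
           (\<lambda>n. complex_of_real (clf n) * clf_t \<tau> ^ n) sums clf_f \<tau>"
proof -
  obtain r where r: "r > 0" "r \<le> 1/2" "\<And>y. norm y < r \<Longrightarrow>
      (\<lambda>n. complex_of_real (clf n) * tp y ^ n) sums eval_fps Pf (tp y) \<and> eval_fps Pf (tp y) = th3 y ^ 2"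
    using R_one by blast
  define y0 where "y0 = max 1 (- ln r / (2 * pi))"
  show ?thesis
  proof (intro exI[of _ y0] conjI allI impI)
    show "y0 > 0" by (simp add: y0_def)
    fix t :: complex assume t: "Im t > y0"
    have h: "(- ln r) / (2 * pi) < Im t" using t unfolding y0_def by linarith
    have "- ln r < Im t * (2 * pi)"
      using h pos_divide_less_eq[of "2*pi" "- ln r" "Im t"] pi_gt_zero by linarith
    hence "- ln r < 2 * pi * Im t" by (simp add: mult.commute)
    hence "- 2 * pi * Im t < ln r" by simp
    hence "exp (- 2 * pi * Im t) < exp (ln r)" by simp
    hence qr: "norm (nome t) < r" using r(1) by (simp add: norm_nome)
    hence q1: "norm (nome t) < 1" using r(2) by simp
    have "(\<lambda>n. complex_of_real (clf n) * tp (nome t) ^ n) sums eval_fps Pf (tp (nome t))"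
         "eval_fps Pf (tp (nome t)) = th3 (nome t) ^ 2"
      using r(3)[OF qr] by blast+
    thus "(\<lambda>n. complex_of_real (clf n) * clf_t t ^ n) sums clf_f t"
      using eta_identities[OF q1] by simp
  qed
qed


end
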